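(* Let $D=2$, $C/2<K<C$, $U=rC$ and $\bar a=rK$ for a positive integer $r$, and let all user and creator types be drawn i.i.d. from the uniform distribution on $\{x\in\mathbb R^2_{\ge0}:\|x\|_2=1\}$. Let $X_1\le\dots\le X_C$ be the order statistics of $C$ i.i.d. $\mathrm{Uniform}(0,1)$ random variables. Then as $r\to\infty$ (with $C,K$ fixed), $$\Pr(\text{at least }K\text{ creators stay after }t=0\text{ under }UC_0)\to\sum_{i=2}^{C-K}\Pr\left(\frac{X_i+X_{K+i}}2\ge\frac KC\ \text{and}\ \frac{X_{i-1}+X_{K+i-1}}2\le1-\frac KC\right)+\Pr\left(\frac{X_1+X_{K+1}}2\ge\frac KC\right)+\Pr\left(\frac{X_{C-K}+X_C}2\le1-\frac KC\right).$$
   Context: Users $\mathcal U_0=\{1,\dots,U\}$, creators $\mathcal C_0=\{1,\dots,C\}$. At $t=0$ the user-centric recommendation assigns each user $i$ the set $UC_0(i)\in\arg\max_{S\subseteq\mathcal C_0,|S|\le K}\sum_{j\in S}u_i^Tc_j$. Creator $j$ stays after $t=0$ if $|\{i\in\mathcal U_0:j\in UC_0(i)\}|\ge\bar a$. *)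

theory Defs
  imports "HOL-Probability.Probability"
begin

definition unif01 :: "real measure" where
  "unif01 = uniform_measure lborel {0..1}"

definition arc_unif :: "(real \<times> real) measure" where
  "arc_unif = distr (uniform_measure lborel {0..pi/2}) borel (\<lambda>\<theta>. (cos \<theta>, sin \<theta>))"

definition is_UC :: "nat \<Rightarrow> nat \<Rightarrow> real \<times> real \<Rightarrow> (nat \<Rightarrow> real \<times> real) \<Rightarrow> nat set \<Rightarrow> bool" where
  "is_UC C K u c S \<longleftrightarrow> S \<subseteq> {..<C} \<and> card S \<le> K \<and>
     (\<forall>T. T \<subseteq> {..<C} \<and> card T \<le> K \<longrightarrow> (\<Sum>j\<in>T. u \<bullet> c j) \<le> (\<Sum>j\<in>S. u \<bullet> c j))"

definition model :: "nat \<Rightarrow> nat \<Rightarrow> ((nat \<Rightarrow> real \<times> real) \<times> (nat \<Rightarrow> real \<times> real)) measure" where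
  "model C U = (PiM {..<U} (\<lambda>_. arc_unif)) \<Otimes>\<^sub>M (PiM {..<C} (\<lambda>_. arc_unif))"

text \<open>Event: under the t=0 user-centric recommendation, at least K creators stay,
  i.e. at least K creators are recommended to at least abar users.\<close>
definition at_least_K_stay :: "nat \<Rightarrow> nat \<Rightarrow> nat \<Rightarrow> nat \<Rightarrow>
    ((nat \<Rightarrow> real \<times> real) \<times> (nat \<Rightarrow> real \<times> real)) set" where
  "at_least_K_stay C K U abar =
     {(u, c) \<in> space (model C U). \<exists>rec. (\<forall>i<U. is_UC C K (u i) c (rec i)) \<and>
        K \<le> card {j\<in>{..<C}. abar \<le> card {i\<in>{..<U}. j \<in> rec i}}}"

definition ostat_space :: "nat \<Rightarrow> (nat \<Rightarrow> real) measure" where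
  "ostat_space C = PiM {..<C} (\<lambda>_. unif01)"

definition ordstat :: "nat \<Rightarrow> (nat \<Rightarrow> real) \<Rightarrow> nat \<Rightarrow> real" where
  "ordstat C x k = sort (map x [0..<C]) ! (k - 1)"

end

theory Submission
  imports Defs
begin

definition gm :: "real \<Rightarrow> real \<times> real" where
  "gm t = (cos (pi/2*t), sin (pi/2*t))"

lemma gm_meas[measurable]: "gm \<in> borel_measurable borel"
  unfolding gm_def by measurable

lemma emeasure_lborel_01: "emeasure lborel {0..1::real} = 1" by simp

lemma prob_space_unif01: "prob_space unif01"
  unfolding unif01_def by (rule prob_space_uniform_measure) auto

lemma sets_unif01[simp, measurable_cong]: "sets unif01 = sets borel"
  unfolding unif01_def by simp

lemma space_unif01[simp]: "space unif01 = UNIV"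
  unfolding unif01_def by simp

lemma emeasure_unif01: "A \<in> sets borel \<Longrightarrow> emeasure unif01 A = emeasure lborel (A \<inter> {0..1})"
  unfolding unif01_def by (subst emeasure_uniform_measure) (auto simp: Int_commute divide_ennreal_def)

lemma measure_unif01: "A \<in> sets borel \<Longrightarrow> measure unif01 A = measure lborel (A \<inter> {0..1})"
  unfolding measure_def by (simp add: emeasure_unif01)

lemma unif_scale0: "distr unif01 lborel (\<lambda>t. pi/2*t) = uniform_measure lborel {0..pi/2}"
proof (rule uniform_distrI)
  show "(\<lambda>t. pi/2*t) \<in> measurable unif01 lborel" by simp
  show "{0..pi/2} \<in> sets lborel" by simp
  show "emeasure lborel {0..pi/2} \<noteq> \<infinity>" by simp
  show "emeasure lborel {0..pi/2} \<noteq> 0" using pi_gt_zero by simp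
  fix B :: "real set" assume B: "B \<in> sets lborel"
  have m: "(\<lambda>t. pi/2*t) -` B \<in> sets borel"
    using B by (intro measurable_sets_borel[of _ borel]) auto
  have seq: "(\<lambda>t. pi/2*t) -` B \<inter> {0..1} = (\<lambda>t. pi/2*t) -` (B \<inter> {0..pi/2})"
  proof -
    have "0 \<le> pi/2*t \<longleftrightarrow> 0 \<le> t" "pi/2*t \<le> pi/2 \<longleftrightarrow> t \<le> 1" for t::real
      using mult_le_cancel_left_pos[of "pi/2" 0 t] mult_le_cancel_left_pos[of "pi/2" t 1] pi_gt_zero by auto
    then show ?thesis by auto
  qed
  have "emeasure unif01 ((\<lambda>t. pi/2*t) -` B \<inter> space unif01)
      = emeasure lborel ((\<lambda>t. pi/2*t) -` B \<inter> {0..1})"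
    using emeasure_unif01[OF m] by simp
  also have "\<dots> = emeasure lborel ((\<lambda>t. pi/2*t) -` (B \<inter> {0..pi/2}))"
    by (rule arg_cong[OF seq])
  also have "\<dots> = emeasure (distr lborel borel ((*) (pi/2))) (B \<inter> {0..pi/2})"
    using B by (subst emeasure_distr) auto
  also have "\<dots> = emeasure (density lborel (\<lambda>_. ennreal (inverse \<bar>pi/2\<bar>))) (B \<inter> {0..pi/2})"
    by (subst lborel_distr_mult) auto
  also have "\<dots> = ennreal (2/pi) * emeasure lborel (B \<inter> {0..pi/2})"
    using B by (subst emeasure_density_const) auto
  also have "\<dots> = emeasure lborel ({0..pi/2} \<inter> B) / emeasure lborel {0..pi/2}"
    using pi_gt_zero by (simp add: Int_commute divide_ennreal_def inverse_ennreal mult.commute)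
  finally show "emeasure unif01 ((\<lambda>t. pi/2*t) -` B \<inter> space unif01)
      = emeasure lborel ({0..pi/2} \<inter> B) / emeasure lborel {0..pi/2}" .
qed

lemma unif_scale: "uniform_measure lborel {0..pi/2} = distr unif01 borel (\<lambda>t. pi/2*t)"
  using unif_scale0 by (metis distr_cong sets_lborel)

lemma arc_unif_eq: "arc_unif = distr unif01 borel gm"
proof -
  have "(\<lambda>\<theta>. (cos \<theta>, sin \<theta>)) \<circ> (*) (pi/2) = gm" by (auto simp: gm_def fun_eq_iff)
  then show ?thesis unfolding arc_unif_def unif_scale
    by (subst distr_distr) auto
qed

lemma prob_space_arc: "prob_space arc_unif"
  unfolding arc_unif_eq by (rule prob_space.prob_space_distr[OF prob_space_unif01]) auto

lemma sets_arc[simp, measurable_cong]: "sets arc_unif = sets borel"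
  unfolding arc_unif_eq by simp

lemma space_arc[simp]: "space arc_unif = UNIV"
  unfolding arc_unif_eq by simp

lemma measure_arc: "B \<in> sets borel \<Longrightarrow> measure arc_unif B = measure lborel (gm -` B \<inter> {0..1})"
  unfolding arc_unif_eq by (subst measure_distr) (auto simp: measure_unif01 measurable_sets_borel[OF gm_meas])

lemma UC_exists: "\<exists>S. is_UC C K u c S"
proof -
  let ?F = "{T. T \<subseteq> {..<C} \<and> card T \<le> K}"
  have fin: "finite ?F" by (rule finite_subset[of _ "Pow {..<C}"]) auto
  have ne: "{} \<in> ?F" by auto
  let ?m = "Max ((\<lambda>T. \<Sum>j\<in>T. u \<bullet> c j) ` ?F)"
  have "?m \<in> (\<lambda>T. \<Sum>j\<in>T. u \<bullet> c j) ` ?F" using fin ne by (intro Max_in) auto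
  then obtain S where S: "S \<in> ?F" "(\<Sum>j\<in>S. u \<bullet> c j) = ?m" by auto
  have "\<forall>T. T \<subseteq> {..<C} \<and> card T \<le> K \<longrightarrow> (\<Sum>j\<in>T. u \<bullet> c j) \<le> (\<Sum>j\<in>S. u \<bullet> c j)"
    using fin S(2) by (auto intro!: Max_ge)
  with S(1) show ?thesis unfolding is_UC_def by blast
qed

lemma UC_char:
  assumes KC: "K < C" and pos: "\<And>k. k < C \<Longrightarrow> u \<bullet> c k > 0"
    and inj: "\<And>k l. k < C \<Longrightarrow> l < C \<Longrightarrow> u \<bullet> c k = u \<bullet> c l \<Longrightarrow> k = l"
    and UC: "is_UC C K u c S"
  shows "j \<in> S \<longleftrightarrow> j < C \<and> card {l\<in>{..<C}. u \<bullet> c l > u \<bullet> c j} < K"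
proof -
  define v where "v k = u \<bullet> c k" for k
  have Ssub: "S \<subseteq> {..<C}" and cardS: "card S \<le> K"
    and opt: "\<And>T. T \<subseteq> {..<C} \<Longrightarrow> card T \<le> K \<Longrightarrow> sum v T \<le> sum v S"
    using UC unfolding is_UC_def v_def by auto
  have finS: "finite S" using Ssub finite_subset by blast
  have cardK: "card S = K"
  proof (rule ccontr)
    assume "card S \<noteq> K"
    with cardS have lt: "card S < K" by simp
    have "card S < card {..<C}" using lt KC by simp
    have "\<not> {..<C} \<subseteq> S"
    proof
      assume sub: "{..<C} \<subseteq> S"
      have "card {..<C} \<le> card S" by (rule card_mono[OF finS sub])
      with \<open>card S < card {..<C}\<close> show False by simp
    qed
    then obtain k where k: "k < C" "k \<notin> S" by auto
    have "card (insert k S) = card S + 1" using k finS by simp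
    then have "sum v (insert k S) \<le> sum v S"
      using k lt Ssub by (intro opt) auto
    moreover have "sum v (insert k S) = v k + sum v S" using k finS by simp
    moreover have "v k > 0" using pos k by (simp add: v_def)
    ultimately show False by simp
  qed
  have swap: "v k < v l" if "k < C" "k \<notin> S" "l \<in> S" for k l
  proof (rule ccontr)
    assume "\<not> v k < v l"
    moreover have "k \<noteq> l" using that by auto
    moreover have "l < C" using that Ssub by auto
    ultimately have gt: "v k > v l" using inj[of k l] that unfolding v_def by force
    let ?T = "insert k (S - {l})"
    have "card (S - {l}) = K - 1" using that(3) finS cardK by simp
    moreover have "k \<notin> S - {l}" using that by simp
    moreover have "card S > 0" using that(3) finS by (auto simp: card_gt_0_iff)
    ultimately have "card ?T = K" using finS cardK
      by (simp add: card_insert_disjoint)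
    then have "sum v ?T \<le> sum v S"
      using that Ssub by (intro opt) auto
    moreover have "sum v ?T = v k + (sum v S - v l)"
      using that finS by (simp add: sum_diff1)
    ultimately show False using gt by simp
  qed
  show ?thesis
  proof
    assume jS: "j \<in> S"
    have "{l\<in>{..<C}. v l > v j} \<subseteq> S - {j}"
    proof
      fix l assume "l \<in> {l\<in>{..<C}. v l > v j}"
      then have l: "l < C" "v l > v j" by auto
      have "l \<in> S"
      proof (rule ccontr)
        assume "l \<notin> S"
        then have "v l < v j" using swap[of l j] l jS by blast
        with l show False by simp
      qed
      moreover have "l \<noteq> j" using l by auto
      ultimately show "l \<in> S - {j}" by blast
    qed
    then have "card {l\<in>{..<C}. v l > v j} \<le> card (S - {j})"
      using finS by (intro card_mono) auto
    also have "\<dots> < K" using jS cardK finS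
      by (metis card_Diff1_less)
    finally show "j < C \<and> card {l\<in>{..<C}. u \<bullet> c l > u \<bullet> c j} < K"
      using jS Ssub unfolding v_def by auto
  next
    assume a: "j < C \<and> card {l\<in>{..<C}. u \<bullet> c l > u \<bullet> c j} < K"
    show "j \<in> S"
    proof (rule ccontr)
      assume "j \<notin> S"
      then have "S \<subseteq> {l\<in>{..<C}. v l > v j}" using swap a Ssub by auto
      then have "card S \<le> card {l\<in>{..<C}. v l > v j}" by (intro card_mono) auto
      with a cardK show False unfolding v_def by simp
    qed
  qed
qed

lemma gm_inner: "gm t \<bullet> gm w = cos (pi/2 * \<bar>t - w\<bar>)"
proof -
  have "gm t \<bullet> gm w = cos (pi/2*t - pi/2*w)"
    by (simp add: gm_def cos_diff)
  also have "\<dots> = cos (pi/2 * (t - w))" by (rule arg_cong[where f=cos]) (simp add: algebra_simps)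
  also have "\<dots> = cos \<bar>pi/2 * (t - w)\<bar>" by (rule cos_abs_real[symmetric])
  also have "\<bar>pi/2 * (t - w)\<bar> = pi/2 * \<bar>t - w\<bar>" by (simp add: abs_mult)
  finally show ?thesis .
qed

lemma gm_inner_less:
  assumes "\<bar>a\<bar> \<le> 1" "\<bar>b\<bar> \<le> 1"
  shows "cos (pi/2 * \<bar>a\<bar>) < cos (pi/2 * \<bar>b\<bar>) \<longleftrightarrow> \<bar>b\<bar> < \<bar>a\<bar>"
proof -
  have "pi/2 * \<bar>a\<bar> \<le> pi" "pi/2 * \<bar>b\<bar> \<le> pi" using assms pi_gt_zero
    by (auto intro: order.trans[OF mult_left_mono[of _ 1]])
  then have "cos (pi/2 * \<bar>a\<bar>) < cos (pi/2 * \<bar>b\<bar>) \<longleftrightarrow> pi/2 * \<bar>b\<bar> < pi/2 * \<bar>a\<bar>"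
    by (intro cos_mono_less_eq) auto
  also have "\<dots> \<longleftrightarrow> \<bar>b\<bar> < \<bar>a\<bar>" using pi_gt_zero by simp
  finally show ?thesis .
qed

lemma gm_inner_pos:
  assumes "\<bar>a\<bar> < 1" shows "cos (pi/2 * \<bar>a\<bar>) > 0"
proof -
  have "pi/2 * \<bar>a\<bar> < pi/2" using assms pi_gt_zero by simp
  moreover have "0 \<le> pi/2 * \<bar>a\<bar>" using pi_gt_zero by simp
  then have "-(pi/2) < pi/2 * \<bar>a\<bar>" using pi_gt_zero by linarith
  ultimately show ?thesis by (rule cos_gt_zero_pi[rotated])
qed

definition generic_t :: "nat \<Rightarrow> (nat \<Rightarrow> real) \<Rightarrow> real \<Rightarrow> bool" where
  "generic_t C x t \<longleftrightarrow> 0 < t \<and> t < 1 \<and> (\<forall>k<C. \<forall>l<C. k \<noteq> l \<longrightarrow> \<bar>t - x k\<bar> \<noteq> \<bar>t - x l\<bar>)"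

definition rank_ok :: "nat \<Rightarrow> nat \<Rightarrow> (nat \<Rightarrow> real) \<Rightarrow> real \<Rightarrow> nat \<Rightarrow> bool" where
  "rank_ok C K x t j \<longleftrightarrow> card {l\<in>{..<C}. \<bar>t - x l\<bar> < \<bar>t - x j\<bar>} < K"

lemma UC_gen:
  assumes KC: "K < C" and x01: "\<And>k. k < C \<Longrightarrow> x k \<in> {0..1}"
    and gen: "generic_t C x t" and j: "j < C"
    and UC: "is_UC C K (gm t) (\<lambda>k. gm (x k)) S"
  shows "j \<in> S \<longleftrightarrow> rank_ok C K x t j"
proof -
  have t01: "0 < t" "t < 1" using gen by (auto simp: generic_t_def)
  have d1: "\<bar>t - x k\<bar> < 1" if "k < C" for k using x01[OF that] t01 by auto
  have "j \<in> S \<longleftrightarrow> j < C \<and> card {l\<in>{..<C}. gm t \<bullet> gm (x l) > gm t \<bullet> gm (x j)} < K"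
  proof (rule UC_char[OF KC _ _ UC])
    show "0 < gm t \<bullet> gm (x k)" if "k < C" for k
      using gm_inner_pos[OF d1[OF that]] by (simp add: gm_inner)
    show "k = l" if "k < C" "l < C" "gm t \<bullet> gm (x k) = gm t \<bullet> gm (x l)" for k l
    proof (rule ccontr)
      assume "k \<noteq> l"
      then have "\<bar>t - x k\<bar> \<noteq> \<bar>t - x l\<bar>" using gen that by (auto simp: generic_t_def)
      then have "\<bar>t - x k\<bar> < \<bar>t - x l\<bar> \<or> \<bar>t - x l\<bar> < \<bar>t - x k\<bar>" by linarith
      moreover have "\<bar>t - x k\<bar> \<le> 1" "\<bar>t - x l\<bar> \<le> 1" using d1 that by force+
      moreover have "cos (pi/2 * \<bar>t - x k\<bar>) = cos (pi/2 * \<bar>t - x l\<bar>)"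
        using that(3) by (simp add: gm_inner)
      ultimately show False using gm_inner_less[of "t - x k" "t - x l"] gm_inner_less[of "t - x l" "t - x k"]
        by auto
    qed
  qed
  also have "{l\<in>{..<C}. gm t \<bullet> gm (x l) > gm t \<bullet> gm (x j)} = {l\<in>{..<C}. \<bar>t - x l\<bar> < \<bar>t - x j\<bar>}"
  proof (intro Collect_cong conj_cong refl)
    fix l assume "l \<in> {..<C}"
    then have "\<bar>t - x l\<bar> \<le> 1" "\<bar>t - x j\<bar> \<le> 1" using d1 j by force+
    then show "(gm t \<bullet> gm (x l) > gm t \<bullet> gm (x j)) = (\<bar>t - x l\<bar> < \<bar>t - x j\<bar>)"
      using gm_inner_less[of "t - x j" "t - x l"] by (simp add: gm_inner)
  qed
  finally show ?thesis using j by (simp add: rank_ok_def)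
qed

definition In_set :: "nat \<Rightarrow> nat \<Rightarrow> (nat \<Rightarrow> real \<times> real) \<Rightarrow> nat \<Rightarrow> (real \<times> real) set" where
  "In_set C K c j = {y. \<forall>S. is_UC C K y c S \<longrightarrow> j \<in> S}"

definition Poss_set :: "nat \<Rightarrow> nat \<Rightarrow> (nat \<Rightarrow> real \<times> real) \<Rightarrow> nat \<Rightarrow> (real \<times> real) set" where
  "Poss_set C K c j = {y. \<exists>S. is_UC C K y c S \<and> j \<in> S}"

lemma In_Poss_gen:
  assumes KC: "K < C" and x01: "\<And>k. k < C \<Longrightarrow> x k \<in> {0..1}"
    and gen: "generic_t C x t" and j: "j < C"
  shows "gm t \<in> In_set C K (\<lambda>k. gm (x k)) j \<longleftrightarrow> rank_ok C K x t j"
    and "gm t \<in> Poss_set C K (\<lambda>k. gm (x k)) j \<longleftrightarrow> rank_ok C K x t j"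
proof -
  obtain S0 where S0: "is_UC C K (gm t) (\<lambda>k. gm (x k)) S0" using UC_exists by blast
  show "gm t \<in> In_set C K (\<lambda>k. gm (x k)) j \<longleftrightarrow> rank_ok C K x t j"
    using UC_gen[OF KC x01 gen j] S0 unfolding In_set_def by blast
  show "gm t \<in> Poss_set C K (\<lambda>k. gm (x k)) j \<longleftrightarrow> rank_ok C K x t j"
    using UC_gen[OF KC x01 gen j] S0 unfolding Poss_set_def by blast
qed

lemma nongeneric_finite:
  assumes x01: "\<And>k. k < C \<Longrightarrow> x k \<in> {0..1}"
    and inj: "inj_on x {..<C}"
  shows "{t\<in>{0..1}. \<not> generic_t C x t} \<subseteq> {0,1} \<union> (\<lambda>(k,l). (x k + x l)/2) ` ({..<C} \<times> {..<C})"
proof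
  fix t assume t: "t \<in> {t\<in>{0..1}. \<not> generic_t C x t}"
  show "t \<in> {0,1} \<union> (\<lambda>(k,l). (x k + x l)/2) ` ({..<C} \<times> {..<C})"
  proof (cases "t = 0 \<or> t = 1")
    case False
    with t have "0 < t" "t < 1" by auto
    with t obtain k l where kl: "k < C" "l < C" "k \<noteq> l" "\<bar>t - x k\<bar> = \<bar>t - x l\<bar>"
      by (auto simp: generic_t_def)
    have "x k \<noteq> x l" using inj kl by (auto simp: inj_on_def)
    then have "t = (x k + x l)/2" using kl(4) by (auto simp: abs_if split: if_splits)
    then have "t \<in> (\<lambda>(k,l). (x k + x l)/2) ` ({..<C} \<times> {..<C})"
      using kl by (intro image_eqI[where x="(k,l)"]) auto
    then show ?thesis by blast
  qed auto
qed

lemma finite_nongeneric: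
  assumes "\<And>k. k < C \<Longrightarrow> x k \<in> {0..1}" "inj_on x {..<C}"
  shows "finite {t\<in>{0..1}. \<not> generic_t C x t}"
  by (rule finite_subset[OF nongeneric_finite[OF assms]]) auto

definition closer :: "nat \<Rightarrow> (nat \<Rightarrow> real) \<Rightarrow> real \<Rightarrow> real \<Rightarrow> nat set" where
  "closer C Y t v = {l\<in>{..<C}. \<bar>t - Y l\<bar> < \<bar>t - v\<bar>}"

definition Wset :: "nat \<Rightarrow> nat \<Rightarrow> (nat \<Rightarrow> real) \<Rightarrow> real \<Rightarrow> real set" where
  "Wset C K Y v = {t\<in>{0..1}. card (closer C Y t v) < K}"

locale incr =
  fixes C :: nat and Y :: "nat \<Rightarrow> real"
  assumes mono: "\<And>i j. i < j \<Longrightarrow> j < C \<Longrightarrow> Y i < Y j"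
begin

lemma mono_le: "i \<le> j \<Longrightarrow> j < C \<Longrightarrow> Y i \<le> Y j"
  using mono[of i j] by (cases "i = j") auto

lemma closer_ge:
  assumes m: "m < C" and t: "Y m \<le> t"
  shows "closer C Y t (Y m) = {l. m < l \<and> l < C \<and> Y l < 2*t - Y m}"
proof (intro set_eqI iffI)
  fix l assume "l \<in> closer C Y t (Y m)"
  then have l: "l < C" "\<bar>t - Y l\<bar> < \<bar>t - Y m\<bar>" by (auto simp: closer_def)
  have "m < l"
  proof (rule ccontr)
    assume "\<not> m < l"
    then have "Y l \<le> Y m" using mono_le[of l m] m by simp
    with l t show False by auto
  qed
  moreover have "Y m < Y l" using mono[OF \<open>m < l\<close> l(1)] .
  ultimately show "l \<in> {l. m < l \<and> l < C \<and> Y l < 2*t - Y m}" using l t by auto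
next
  fix l assume "l \<in> {l. m < l \<and> l < C \<and> Y l < 2*t - Y m}"
  then have l: "m < l" "l < C" "Y l < 2*t - Y m" by auto
  have "Y m < Y l" using mono[OF l(1,2)] .
  then show "l \<in> closer C Y t (Y m)" using l t by (auto simp: closer_def)
qed

lemma closer_lt:
  assumes m: "m < C" and t: "t < Y m"
  shows "closer C Y t (Y m) \<subseteq> {..<m}"
proof
  fix l assume "l \<in> closer C Y t (Y m)"
  then have l: "l < C" "\<bar>t - Y l\<bar> < \<bar>t - Y m\<bar>" by (auto simp: closer_def)
  show "l \<in> {..<m}"
  proof (rule ccontr)
    assume "l \<notin> {..<m}"
    then have "Y m \<le> Y l" using mono_le[of m l] l by simp
    with l t show False by auto
  qed
qed

lemma closer_le:
  assumes m: "m < C" and t: "t \<le> Y m"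
  shows "closer C Y t (Y m) = {l. l < m \<and> Y l > 2*t - Y m}"
proof (intro set_eqI iffI)
  fix l assume "l \<in> closer C Y t (Y m)"
  then have l: "l < C" "\<bar>t - Y l\<bar> < \<bar>t - Y m\<bar>" by (auto simp: closer_def)
  have "l < m"
  proof (rule ccontr)
    assume "\<not> l < m"
    then have "Y m \<le> Y l" using mono_le[of m l] l by simp
    with l t show False by auto
  qed
  moreover have "Y l < Y m" using mono[OF \<open>l < m\<close> m] .
  ultimately show "l \<in> {l. l < m \<and> Y l > 2*t - Y m}" using l t by auto
next
  fix l assume "l \<in> {l. l < m \<and> Y l > 2*t - Y m}"
  then have l: "l < m" "Y l > 2*t - Y m" by auto
  have "Y l < Y m" using mono[OF l(1) m] .
  then show "l \<in> closer C Y t (Y m)" using l t m by (auto simp: closer_def)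
qed

lemma closer_gt:
  assumes m: "m < C" and t: "Y m < t"
  shows "closer C Y t (Y m) \<subseteq> {m<..<C}"
proof
  fix l assume "l \<in> closer C Y t (Y m)"
  then have l: "l < C" "\<bar>t - Y l\<bar> < \<bar>t - Y m\<bar>" by (auto simp: closer_def)
  show "l \<in> {m<..<C}"
  proof (rule ccontr)
    assume "l \<notin> {m<..<C}"
    then have "Y l \<le> Y m" using mono_le[of l m] l m by simp
    with l t show False by auto
  qed
qed

lemma card_closer_lt:
  assumes m: "m < C" and t: "t < Y m"
  shows "card (closer C Y t (Y m)) \<le> m"
  using card_mono[OF _ closer_lt[OF m t]] by simp

lemma card_closer_gt:
  assumes m: "m < C" and t: "Y m < t"
  shows "card (closer C Y t (Y m)) \<le> C - 1 - m"
  using card_mono[OF _ closer_gt[OF m t]] by simp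

context
  fixes K :: nat
  assumes KC: "K < C" and CK: "C < 2*K"
begin

lemma W_left:
  assumes m: "m + K < C"
  shows "Wset C K Y (Y m) = {t\<in>{0..1}. t \<le> (Y m + Y (m+K))/2}"
proof -
  have mK: "m < K" using m CK by simp
  have mC: "m < C" using m by simp
  have YmK: "Y m < Y (m+K)" using mono[of m "m+K"] m KC CK by simp
  have "card (closer C Y t (Y m)) < K \<longleftrightarrow> t \<le> (Y m + Y (m+K))/2" for t
  proof (cases "t < Y m")
    case True
    then show ?thesis using card_closer_lt[OF mC True] mK YmK by simp
  next
    case False
    then have cl: "closer C Y t (Y m) = {l. m < l \<and> l < C \<and> Y l < 2*t - Y m}"
      using closer_ge[OF mC] by simp
    show ?thesis
    proof (cases "t \<le> (Y m + Y (m+K))/2")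
      case True
      have "closer C Y t (Y m) \<subseteq> {m<..<m+K}"
      proof
        fix l assume "l \<in> closer C Y t (Y m)"
        then have l: "m < l" "l < C" "Y l < 2*t - Y m" using cl by auto
        have "l < m + K"
        proof (rule ccontr)
          assume "\<not> l < m + K"
          then have "Y (m+K) \<le> Y l" using mono_le[of "m+K" l] l by simp
          with l True show False by simp
        qed
        with l show "l \<in> {m<..<m+K}" by simp
      qed
      then have "card (closer C Y t (Y m)) \<le> card {m<..<m+K}" by (intro card_mono) auto
      also have "\<dots> < K" using mK by simp
      finally show ?thesis using True by simp
    next
      case False
      have "{m<..m+K} \<subseteq> closer C Y t (Y m)"
      proof
        fix l assume "l \<in> {m<..m+K}"
        then have l: "m < l" "l \<le> m + K" by auto
        have "Y l \<le> Y (m+K)" using mono_le[OF l(2)] m by simp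
        then show "l \<in> closer C Y t (Y m)" using cl l m False by auto
      qed
      then have "card {m<..m+K} \<le> card (closer C Y t (Y m))"
        by (intro card_mono) (auto simp: closer_def)
      then show ?thesis using False by simp
    qed
  qed
  then show ?thesis by (auto simp: Wset_def)
qed

lemma W_right:
  assumes m: "K \<le> m" "m < C"
  shows "Wset C K Y (Y m) = {t\<in>{0..1}. (Y (m-K) + Y m)/2 \<le> t}"
proof -
  have mK: "C - 1 - m < K" using m CK by simp
  have K0: "0 < K" using CK by simp
  have YmK: "Y (m-K) < Y m" using mono[of "m-K" m] m K0 by simp
  have "card (closer C Y t (Y m)) < K \<longleftrightarrow> (Y (m-K) + Y m)/2 \<le> t" for t
  proof (cases "Y m < t")
    case True
    then show ?thesis using card_closer_gt[OF m(2) True] mK YmK by simp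
  next
    case False
    then have cl: "closer C Y t (Y m) = {l. l < m \<and> Y l > 2*t - Y m}"
      using closer_le[OF m(2)] by simp
    show ?thesis
    proof (cases "(Y (m-K) + Y m)/2 \<le> t")
      case True
      have "closer C Y t (Y m) \<subseteq> {m-K<..<m}"
      proof
        fix l assume "l \<in> closer C Y t (Y m)"
        then have l: "l < m" "Y l > 2*t - Y m" using cl by auto
        have "m - K < l"
        proof (rule ccontr)
          assume "\<not> m - K < l"
          then have "Y l \<le> Y (m-K)" using mono_le[of l "m-K"] m by simp
          with l True show False by simp
        qed
        with l show "l \<in> {m-K<..<m}" by simp
      qed
      then have "card (closer C Y t (Y m)) \<le> card {m-K<..<m}" by (intro card_mono) auto
      also have "\<dots> < K" using m K0 by simp
      finally show ?thesis using True by simp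
    next
      case False
      have "{m-K..<m} \<subseteq> closer C Y t (Y m)"
      proof
        fix l assume "l \<in> {m-K..<m}"
        then have l: "m - K \<le> l" "l < m" by auto
        have "Y (m-K) \<le> Y l" using mono_le[OF l(1)] l m by simp
        then show "l \<in> closer C Y t (Y m)" using cl l m False by auto
      qed
      then have "card {m-K..<m} \<le> card (closer C Y t (Y m))"
        by (intro card_mono) (auto simp: closer_def)
      then show ?thesis using False m by simp
    qed
  qed
  then show ?thesis by (auto simp: Wset_def)
qed

lemma W_mid:
  assumes m: "m < K" "C \<le> m + K"
  shows "Wset C K Y (Y m) = {0..1}"
proof -
  have mC: "m < C" using m KC by simp
  have "card (closer C Y t (Y m)) < K" for t
  proof (cases "t < Y m")
    case True
    then show ?thesis using card_closer_lt[OF mC True] m by simp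
  next
    case False
    then have "closer C Y t (Y m) \<subseteq> {m<..<C}"
      using closer_ge[OF mC] by auto
    then have "card (closer C Y t (Y m)) \<le> card {m<..<C}" by (intro card_mono) auto
    then show ?thesis using m KC by simp
  qed
  then show ?thesis by (auto simp: Wset_def)
qed

end
end

abbreviation MU :: "nat \<Rightarrow> (nat \<Rightarrow> real \<times> real) measure" where
  "MU n \<equiv> PiM {..<n} (\<lambda>_. arc_unif)"

lemma prob_space_MU: "prob_space (MU n)"
  by (intro prob_space_PiM prob_space_arc)

lemma indep_components:
  assumes n: "0 < n"
  shows "prob_space.indep_vars (MU n) (\<lambda>_. arc_unif) (\<lambda>i u. u i) {..<n}"
proof -
  interpret P: prob_space "MU n" by (rule prob_space_MU)
  have "distr (MU n) (PiM {..<n} (\<lambda>_. arc_unif)) (\<lambda>x. \<lambda>i\<in>{..<n}. x i) = MU n"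
  proof -
    have "distr (MU n) (PiM {..<n} (\<lambda>_. arc_unif)) (\<lambda>x. \<lambda>i\<in>{..<n}. x i)
        = distr (MU n) (PiM {..<n} (\<lambda>_. arc_unif)) (\<lambda>x. x)"
      by (intro distr_cong) (auto simp: space_PiM PiE_def extensional_restrict)
    also have "\<dots> = MU n" by (rule distr_id)
    finally show ?thesis .
  qed
  moreover have "(\<Pi>\<^sub>M i\<in>{..<n}. distr (MU n) arc_unif (\<lambda>x. x i)) = MU n"
  proof -
    have "\<And>i. i \<in> {..<n} \<Longrightarrow> distr (MU n) arc_unif (\<lambda>x. x i) = arc_unif"
      by (rule distr_PiM_component) (auto intro: prob_space_arc)
    then show ?thesis by (intro PiM_cong) auto
  qed
  moreover have rv: "(\<lambda>u. u i) \<in> measurable (MU n) arc_unif" for i :: nat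
  proof (cases "i < n")
    case True then show ?thesis using measurable_component_singleton[of i "{..<n}" "\<lambda>_. arc_unif"] by simp
  next
    case False
    then have "\<forall>u\<in>space (MU n). u i = undefined" by (auto simp: space_PiM PiE_def extensional_def)
    then show ?thesis by (subst measurable_cong[where g="\<lambda>_. undefined"]) auto
  qed
  ultimately show ?thesis
    using n by (subst P.indep_vars_iff_distr_eq_PiM) auto
qed

lemma card_eq_sum_ind:
  fixes n :: nat
  shows "real (card {i\<in>{..<n}. u i \<in> B}) = (\<Sum>i\<in>{..<n}. indicator B (u i))"
proof -
  have "(\<Sum>i\<in>{..<n}. indicator B (u i) :: real) = (\<Sum>i\<in>{i\<in>{..<n}. u i \<in> B}. 1)"
    by (intro sum.mono_neutral_cong_right) (auto simp: indicator_def)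
  then show ?thesis by simp
qed

lemma hoeffding_MU:
  assumes n: "0 < n" and B: "B \<in> sets borel" and e: "0 \<le> \<epsilon>"
  defines "p \<equiv> measure arc_unif B"
  shows "measure (MU n) {u\<in>space (MU n). real (card {i\<in>{..<n}. u i \<in> B}) \<le> n * p - \<epsilon>}
           \<le> exp (-2 * \<epsilon>\<^sup>2 / n)"
    and "measure (MU n) {u\<in>space (MU n). real (card {i\<in>{..<n}. u i \<in> B}) \<ge> n * p + \<epsilon>}
           \<le> exp (-2 * \<epsilon>\<^sup>2 / n)"
proof -
  interpret P: prob_space "MU n" by (rule prob_space_MU)
  define X where "X = (\<lambda>i (u::nat \<Rightarrow> real \<times> real). indicator B (u i) :: real)"
  define Y where "Y = (\<lambda>(u::nat \<Rightarrow> real \<times> real). indicator B (u 0) :: real)"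
  have distrX: "distr (MU n) borel (X i) = distr arc_unif borel (indicator B)" if "i < n" for i
  proof -
    have "distr (MU n) borel (X i) = distr (distr (MU n) arc_unif (\<lambda>u. u i)) borel (indicator B)"
      using B that by (subst distr_distr) (auto simp: X_def comp_def)
    also have "distr (MU n) arc_unif (\<lambda>u. u i) = arc_unif"
      using that by (intro distr_PiM_component prob_space_arc) auto
    finally show ?thesis .
  qed
  have EY: "P.expectation Y = p"
  proof -
    have "P.expectation Y = integral\<^sup>L (distr (MU n) arc_unif (\<lambda>u. u 0)) (indicator B)"
      using B n by (subst integral_distr) (auto simp: Y_def)
    also have "distr (MU n) arc_unif (\<lambda>u. u 0) = arc_unif"
      using n by (intro distr_PiM_component prob_space_arc) auto
    also have "integral\<^sup>L arc_unif (indicator B) = p"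
      unfolding p_def by simp
    finally show ?thesis .
  qed
  interpret H: Hoeffding_ineq_iid "MU n" "{..<n}" X Y 0 1 p
  proof unfold_locales
    show "finite {..<n}" by simp
    show "P.indep_vars (\<lambda>_. borel) X {..<n}"
      unfolding X_def
      by (rule P.indep_vars_compose2[OF indep_components[OF n]]) (use B in auto)
    show "distr (MU n) borel (X i) = distr (MU n) borel Y" if "i \<in> {..<n}" for i
      using distrX[of i] distrX[of 0] that n by (simp add: X_def Y_def)
    have "(\<lambda>u. u 0) \<in> measurable (MU n) arc_unif" using n measurable_component_singleton[of 0 "{..<n}" "\<lambda>_. arc_unif"] by simp
    moreover have "(indicator B :: real \<times> real \<Rightarrow> real) \<in> borel_measurable arc_unif" using B by simp
    ultimately have "(\<lambda>u. indicator B (u 0) :: real) \<in> borel_measurable (MU n)" by (rule measurable_compose)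
    then show "Y \<in> borel_measurable (MU n)" unfolding Y_def .
    show "AE x in MU n. Y x \<in> {0..1}" by (auto simp: Y_def indicator_def)
    show "p \<equiv> P.expectation Y" by (rule eq_reflection) (simp add: EY)
  qed
  have ne: "{..<n} \<noteq> {}" using n by auto
  have sumX: "(\<Sum>i\<in>{..<n}. X i u) = real (card {i\<in>{..<n}. u i \<in> B})" for u
    unfolding X_def by (rule card_eq_sum_ind[symmetric])
  show "measure (MU n) {u\<in>space (MU n). real (card {i\<in>{..<n}. u i \<in> B}) \<le> n * p - \<epsilon>}
           \<le> exp (-2 * \<epsilon>\<^sup>2 / n)"
    using H.Hoeffding_ineq_le[OF e zero_less_one ne] by (simp add: sumX)
  show "measure (MU n) {u\<in>space (MU n). real (card {i\<in>{..<n}. u i \<in> B}) \<ge> n * p + \<epsilon>}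
           \<le> exp (-2 * \<epsilon>\<^sup>2 / n)"
    using H.Hoeffding_ineq_ge[OF e zero_less_one ne] by (simp add: sumX)
qed

definition sY :: "nat \<Rightarrow> (nat \<Rightarrow> real) \<Rightarrow> nat \<Rightarrow> real" where
  "sY C x i = sort (map x [0..<C]) ! i"

lemma ordstat_sY: "ordstat C x k = sY C x (k - 1)"
  by (simp add: ordstat_def sY_def)

lemma sY_mono: "i \<le> j \<Longrightarrow> j < C \<Longrightarrow> sY C x i \<le> sY C x j"
  unfolding sY_def by (rule sorted_nth_mono) auto

lemma sY_incr:
  assumes "inj_on x {..<C}" shows "incr C (sY C x)"
proof
  fix i j assume ij: "i < j" "j < C"
  have "distinct (map x [0..<C])" using assms by (simp add: distinct_map lessThan_atLeast0)
  then have "sorted_wrt (<) (sort (map x [0..<C]))"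
    by (simp add: strict_sorted_iff)
  from sorted_wrt_nth_less[OF this ij(1)] ij show "sY C x i < sY C x j" by (simp add: sY_def)
qed

lemma sY_image: "sY C x ` {..<C} = x ` {..<C}"
proof -
  have "sY C x ` {..<C} = set (sort (map x [0..<C]))"
    unfolding sY_def by (auto simp: set_conv_nth)
  also have "\<dots> = x ` {..<C}" by (auto simp: lessThan_atLeast0)
  finally show ?thesis .
qed

lemma card_trick:
  assumes "inj_on f A" "inj_on g B" "f ` A = g ` B"
  shows "card {a\<in>A. P (f a)} = card {b\<in>B. P (g b)}"
proof -
  have "card {a\<in>A. P (f a)} = card (f ` {a\<in>A. P (f a)})"
    using assms(1) by (intro card_image[symmetric]) (auto intro: inj_on_subset)
  also have "f ` {a\<in>A. P (f a)} = {v\<in>f ` A. P v}" by auto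
  also have "\<dots> = {v\<in>g ` B. P v}" using assms(3) by simp
  also have "\<dots> = g ` {b\<in>B. P (g b)}" by auto
  also have "card \<dots> = card {b\<in>B. P (g b)}"
    using assms(2) by (intro card_image) (auto intro: inj_on_subset)
  finally show ?thesis .
qed

lemma incr_inj: "incr C Y \<Longrightarrow> inj_on Y {..<C}"
  unfolding inj_on_def incr_def by (metis lessThan_iff linorder_neqE_nat order_less_irrefl)

lemma Wset_sY:
  assumes inj: "inj_on x {..<C}"
  shows "Wset C K x v = Wset C K (sY C x) v"
proof -
  have i2: "inj_on (sY C x) {..<C}" by (rule incr_inj[OF sY_incr[OF inj]])
  have "card (closer C x t v) = card (closer C (sY C x) t v)" for t
    unfolding closer_def
    by (rule card_trick[of x "{..<C}" "sY C x" "{..<C}" "\<lambda>w. \<bar>t - w\<bar> < \<bar>t - v\<bar>"])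
       (use inj i2 sY_image[of C x] in auto)
  then show ?thesis by (simp add: Wset_def)
qed

lemma sY_01:
  assumes "\<And>j. j < C \<Longrightarrow> x j \<in> {0..1}" "i < C"
  shows "sY C x i \<in> {0..1}"
proof -
  have "sY C x i \<in> sY C x ` {..<C}" using assms(2) by auto
  then have "sY C x i \<in> x ` {..<C}" by (simp only: sY_image)
  then show ?thesis using assms(1) by auto
qed

lemma Ev_a:
  fixes a :: "nat \<Rightarrow> real" and n :: nat and \<kappa> :: real
  assumes n: "1 \<le> n" and mono: "\<And>i j. i \<le> j \<Longrightarrow> j < n \<Longrightarrow> a i \<le> a j"
    and kap: "1 - \<kappa> < \<kappa>"
    and gen: "\<And>i. i < n \<Longrightarrow> a i \<noteq> \<kappa> \<and> a i \<noteq> 1 - \<kappa>"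
  shows "(\<forall>i<n. a i > \<kappa> \<or> a i < 1 - \<kappa>) \<longleftrightarrow>
         (a 0 \<ge> \<kappa> \<or> a (n-1) \<le> 1 - \<kappa> \<or> (\<exists>i\<in>{2..n}. a (i-1) \<ge> \<kappa> \<and> a (i-2) \<le> 1 - \<kappa>))"
proof
  assume H: "\<forall>i<n. a i > \<kappa> \<or> a i < 1 - \<kappa>"
  show "a 0 \<ge> \<kappa> \<or> a (n-1) \<le> 1 - \<kappa> \<or> (\<exists>i\<in>{2..n}. a (i-1) \<ge> \<kappa> \<and> a (i-2) \<le> 1 - \<kappa>)"
  proof (cases "a 0 > \<kappa>")
    case True then show ?thesis by simp
  next
    case a0: False
    show ?thesis
    proof (cases "\<exists>i<n. a i > \<kappa>")
      case False
      then have "a (n-1) < 1 - \<kappa>" using H n by (metis diff_less zero_less_one less_le_trans)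
      then show ?thesis by simp
    next
      case True
      define i0 where "i0 = (LEAST i. i < n \<and> a i > \<kappa>)"
      have i0: "i0 < n" "a i0 > \<kappa>" using LeastI_ex[OF True] unfolding i0_def by auto
      have i0pos: "i0 \<ge> 1" using i0 a0 by (cases i0) auto
      have "\<not> (i0 - 1 < n \<and> a (i0 - 1) > \<kappa>)"
        using not_less_Least[of "i0 - 1" "\<lambda>i. i < n \<and> a i > \<kappa>"] i0pos unfolding i0_def[symmetric] by auto
      then have "a (i0 - 1) < 1 - \<kappa>" using H i0 by (metis less_imp_diff_less)
      then have "i0 + 1 \<in> {2..n} \<and> a (i0 + 1 - 1) \<ge> \<kappa> \<and> a (i0 + 1 - 2) \<le> 1 - \<kappa>"
        using i0 i0pos by (auto simp: numeral_2_eq_2)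
      then show ?thesis by blast
    qed
  qed
next
  assume E: "a 0 \<ge> \<kappa> \<or> a (n-1) \<le> 1 - \<kappa> \<or> (\<exists>i\<in>{2..n}. a (i-1) \<ge> \<kappa> \<and> a (i-2) \<le> 1 - \<kappa>)"
  show "\<forall>i<n. a i > \<kappa> \<or> a i < 1 - \<kappa>"
  proof (intro allI impI)
    fix i assume i: "i < n"
    from E show "a i > \<kappa> \<or> a i < 1 - \<kappa>"
    proof (elim disjE bexE conjE)
      assume "a 0 \<ge> \<kappa>"
      then have "a i \<ge> \<kappa>" using mono[of 0 i] i by simp
      then show ?thesis using gen[OF i] by auto
    next
      assume "a (n-1) \<le> 1 - \<kappa>"
      moreover have "a i \<le> a (n-1)" using i by (intro mono) auto
      ultimately have "a i \<le> 1 - \<kappa>" by simp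
      then show ?thesis using gen[OF i] by auto
    next
      fix k assume k: "k \<in> {2..n}" "a (k-1) \<ge> \<kappa>" "a (k-2) \<le> 1 - \<kappa>"
      show ?thesis
      proof (cases "k - 1 \<le> i")
        case True
        then have "a i \<ge> \<kappa>" using mono[of "k-1" i] i k by simp
        then show ?thesis using gen[OF i] by auto
      next
        case False
        then have "i \<le> k - 2" by simp
        then have "a i \<le> a (k-2)" using i k by (intro mono) auto
        then have "a i \<le> 1 - \<kappa>" using k by simp
        then show ?thesis using gen[OF i] by auto
      qed
    qed
  qed
qed

lemma (in incr) count_iff:
  assumes KC: "K < C" and CK: "C < 2*K" and Y01: "\<And>m. m < C \<Longrightarrow> Y m \<in> {0..1}"
  defines "\<kappa> \<equiv> real K / real C"
  shows "K \<le> card {m\<in>{..<C}. measure lborel (Wset C K Y (Y m)) > \<kappa>} \<longleftrightarrow>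
         (\<forall>i<C-K. (Y i + Y (i+K))/2 > \<kappa> \<or> (Y i + Y (i+K))/2 < 1 - \<kappa>)"
proof -
  define n where "n = C - K"
  define a where "a i = (Y i + Y (i+K))/2" for i
  define q where "q m = measure lborel (Wset C K Y (Y m))" for m
  have C0: "0 < C" using KC by simp
  have kap: "1 - \<kappa> < \<kappa>"
  proof -
    have "real C < 2 * real K" using CK by linarith
    then have "1/2 < \<kappa>" using C0 unfolding \<kappa>_def by (simp add: field_simps)
    then show ?thesis by simp
  qed
  have nK: "n \<le> K" using CK unfolding n_def by simp
  have a01: "0 \<le> a i \<and> a i \<le> 1" if "i < n" for i
  proof -
    have "i < C" "i + K < C" using that unfolding n_def by auto
    then show ?thesis using Y01[of i] Y01[of "i+K"] unfolding a_def by auto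
  qed
  have q_left: "q m = a m" if "m < n" for m
  proof -
    have "Wset C K Y (Y m) = {t\<in>{0..1}. t \<le> a m}"
      unfolding a_def using W_left[OF KC CK, of m] that n_def by simp
    also have "\<dots> = {0..a m}" using a01[OF that] by auto
    finally show ?thesis using a01[OF that] by (simp add: q_def)
  qed
  have q_right: "q m = 1 - a (m - K)" if "K \<le> m" "m < C" for m
  proof -
    have mn: "m - K < n" using that unfolding n_def by simp
    have "Wset C K Y (Y m) = {t\<in>{0..1}. a (m - K) \<le> t}"
      unfolding a_def using W_right[OF KC CK, of m] that by simp
    also have "\<dots> = {a (m - K)..1}" using a01[OF mn] by auto
    finally show ?thesis using a01[OF mn] by (simp add: q_def)
  qed
  have q_mid: "q m = 1" if "n \<le> m" "m < K" for m
  proof -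
    have "Wset C K Y (Y m) = {0..1}" using W_mid[OF KC CK, of m] that unfolding n_def by simp
    then show ?thesis by (simp add: q_def)
  qed
  have k1: "\<kappa> < 1" using KC C0 unfolding \<kappa>_def by simp
  define S1 where "S1 = {i\<in>{..<n}. a i > \<kappa>}"
  define S3 where "S3 = {i\<in>{..<n}. a i < 1 - \<kappa>}"
  have Seq: "{m\<in>{..<C}. q m > \<kappa>} = S1 \<union> {n..<K} \<union> (\<lambda>i. i + K) ` S3"
  proof (intro set_eqI iffI)
    fix m assume "m \<in> {m\<in>{..<C}. q m > \<kappa>}"
    then have m: "m < C" "q m > \<kappa>" by auto
    show "m \<in> S1 \<union> {n..<K} \<union> (\<lambda>i. i + K) ` S3"
    proof (cases "m < n")
      case True then show ?thesis using m q_left S1_def by auto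
    next
      case False
      show ?thesis
      proof (cases "m < K")
        case True then show ?thesis using False by auto
      next
        case False2: False
        then have "m - K \<in> S3" using m q_right[of m] S3_def n_def by auto
        moreover have "m = (m - K) + K" using False2 by simp
        ultimately show ?thesis by blast
      qed
    qed
  next
    fix m assume "m \<in> S1 \<union> {n..<K} \<union> (\<lambda>i. i + K) ` S3"
    then consider "m \<in> S1" | "m \<in> {n..<K}" | i where "i \<in> S3" "m = i + K" by blast
    then show "m \<in> {m\<in>{..<C}. q m > \<kappa>}"
    proof cases
      case 1 then show ?thesis using q_left S1_def n_def by auto
    next
      case 2 then show ?thesis using q_mid k1 KC by auto
    next
      case 3
      then have "m < C" using S3_def n_def by auto
      then show ?thesis using q_right[of m] 3 S3_def by auto
    qed
  qed
  have d1: "S1 \<inter> {n..<K} = {}" "(S1 \<union> {n..<K}) \<inter> (\<lambda>i. i + K) ` S3 = {}"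
    using S1_def S3_def n_def nK by auto
  have fin: "finite S1" "finite S3" using S1_def S3_def by auto
  have "card {m\<in>{..<C}. q m > \<kappa>} = card S1 + (K - n) + card S3"
  proof -
    have "card {m\<in>{..<C}. q m > \<kappa>} = card (S1 \<union> {n..<K}) + card ((\<lambda>i. i + K) ` S3)"
      unfolding Seq using fin d1 by (intro card_Un_disjoint) auto
    also have "card (S1 \<union> {n..<K}) = card S1 + card {n..<K}"
      using fin d1 by (intro card_Un_disjoint) auto
    also have "card ((\<lambda>i. i + K) ` S3) = card S3" by (intro card_image) (auto simp: inj_on_def)
    finally show ?thesis by simp
  qed
  moreover have "card S1 + card S3 = card (S1 \<union> S3)"
    using fin kap by (intro card_Un_disjoint[symmetric]) (auto simp: S1_def S3_def)
  moreover have sub: "S1 \<union> S3 \<subseteq> {..<n}" using S1_def S3_def by auto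
  ultimately have "K \<le> card {m\<in>{..<C}. q m > \<kappa>} \<longleftrightarrow> n \<le> card (S1 \<union> S3)" using nK
    by (simp only:) linarith
  also have "\<dots> \<longleftrightarrow> S1 \<union> S3 = {..<n}"
  proof
    assume "n \<le> card (S1 \<union> S3)"
    then show "S1 \<union> S3 = {..<n}" using sub by (intro card_seteq) auto
  qed simp
  also have "\<dots> \<longleftrightarrow> (\<forall>i<n. a i > \<kappa> \<or> a i < 1 - \<kappa>)" using sub unfolding S1_def S3_def by auto
  finally show ?thesis unfolding q_def a_def n_def .
qed

lemma count_set_meas:
  fixes n :: nat
  assumes B: "B \<in> sets borel"
  shows "{u\<in>space (MU n). m \<le> card {i\<in>{..<n}. u i \<in> B}} \<in> sets (MU n)"
proof -
  have "{u\<in>space (MU n). m \<le> card {i\<in>{..<n}. u i \<in> B}}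
      = {u\<in>space (MU n). real m \<le> (\<Sum>i\<in>{..<n}. indicator B (u i))}"
    by (simp only: card_eq_sum_ind[symmetric] of_nat_le_iff)
  also have "\<dots> \<in> sets (MU n)"
    using B by measurable
  finally show ?thesis .
qed

lemma exp_pow: "exp (-2 * (real r * d)\<^sup>2 / (real r * c)) = exp (-2 * d\<^sup>2 / c) ^ r"
  if "r > 0" for r :: nat
proof -
  have eq: "-2 * (real r * d)\<^sup>2 / (real r * c) = real r * (-2 * d\<^sup>2 / c)"
    using that by (simp add: power2_eq_square field_simps)
  show ?thesis unfolding eq by (rule exp_of_nat_mult)
qed

lemma pow_lim0: "(\<lambda>r. exp (-2 * d\<^sup>2 / c) ^ r) \<longlonglongrightarrow> 0" if "d \<noteq> 0" "c > 0" for d c :: real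
proof -
  have "-2 * d\<^sup>2 / c < 0" using that by (simp add: divide_neg_pos)
  then have "exp (-2 * d\<^sup>2 / c) < 1" by simp
  then show ?thesis by (intro LIMSEQ_power_zero) simp
qed

lemma conc_hi:
  assumes C: "0 < C" and B: "B \<in> sets borel" and p: "measure arc_unif B > real K / real C"
  shows "(\<lambda>r. measure (MU (r*C)) {u\<in>space (MU (r*C)). r*K \<le> card {i\<in>{..<r*C}. u i \<in> B}}) \<longlonglongrightarrow> 1"
proof -
  define pp where "pp = measure arc_unif B"
  define d where "d = real C * pp - real K"
  have d: "d > 0" using p C by (simp add: d_def pp_def field_simps)
  define q where "q = exp (-2 * d\<^sup>2 / C)"
  have low: "1 - q ^ r \<le> measure (MU (r*C)) {u\<in>space (MU (r*C)). r*K \<le> card {i\<in>{..<r*C}. u i \<in> B}}"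
    if r: "r > 0" for r :: nat
  proof -
    let ?n = "r*C"
    let ?A = "{u\<in>space (MU ?n). r*K \<le> card {i\<in>{..<?n}. u i \<in> B}}"
    interpret P: prob_space "MU ?n" by (rule prob_space_MU)
    have n: "0 < ?n" using r C by simp
    have A: "?A \<in> sets (MU ?n)" by (rule count_set_meas[OF B])
    have sub: "space (MU ?n) - ?A \<subseteq> {u\<in>space (MU ?n). real (card {i\<in>{..<?n}. u i \<in> B}) \<le> ?n * pp - r * d}"
    proof
      fix u assume u: "u \<in> space (MU ?n) - ?A"
      then have "card {i\<in>{..<?n}. u i \<in> B} < r*K" by auto
      then have "real (card {i\<in>{..<?n}. u i \<in> B}) \<le> real (r*K)" by linarith
      also have "real (r*K) = ?n * pp - r * d" by (simp add: d_def algebra_simps)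
      finally show "u \<in> {u\<in>space (MU ?n). real (card {i\<in>{..<?n}. u i \<in> B}) \<le> ?n * pp - r * d}"
        using u by auto
    qed
    have "measure (MU ?n) (space (MU ?n) - ?A) \<le>
          measure (MU ?n) {u\<in>space (MU ?n). real (card {i\<in>{..<?n}. u i \<in> B}) \<le> ?n * pp - r * d}"
      using sub by (intro P.finite_measure_mono) (use B in measurable)
    also have "\<dots> \<le> exp (-2 * (r*d)\<^sup>2 / ?n)"
      using hoeffding_MU(1)[OF n B, of "r*d"] d unfolding pp_def by simp
    also have "\<dots> = q ^ r" unfolding q_def using exp_pow[OF r, of d C] by simp
    finally have "measure (MU ?n) (space (MU ?n) - ?A) \<le> q ^ r" .
    moreover have "measure (MU ?n) (space (MU ?n) - ?A) = 1 - measure (MU ?n) ?A"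
      using A by (rule P.prob_compl)
    ultimately show ?thesis by simp
  qed
  have "(\<lambda>r. 1 - q ^ r) \<longlonglongrightarrow> 1 - 0"
    unfolding q_def using d C by (intro tendsto_diff tendsto_const pow_lim0) auto
  then have l1: "(\<lambda>r. 1 - q ^ r) \<longlonglongrightarrow> 1" by simp
  have l2: "(\<lambda>r. 1::real) \<longlonglongrightarrow> 1" by simp
  have e1: "eventually (\<lambda>r. 1 - q ^ r \<le> measure (MU (r*C)) {u\<in>space (MU (r*C)). r*K \<le> card {i\<in>{..<r*C}. u i \<in> B}}) sequentially"
    using low by (intro eventually_sequentiallyI[of 1]) auto
  have e2: "eventually (\<lambda>r. measure (MU (r*C)) {u\<in>space (MU (r*C)). r*K \<le> card {i\<in>{..<r*C}. u i \<in> B}} \<le> 1) sequentially"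
    by (intro always_eventually allI prob_space.prob_le_1[OF prob_space_MU])
  show ?thesis by (rule tendsto_sandwich[OF e1 e2 l1 l2])
qed

lemma conc_lo:
  assumes C: "0 < C" and B: "B \<in> sets borel" and p: "measure arc_unif B < real K / real C"
  shows "(\<lambda>r. measure (MU (r*C)) {u\<in>space (MU (r*C)). r*K \<le> card {i\<in>{..<r*C}. u i \<in> B}}) \<longlonglongrightarrow> 0"
proof -
  define pp where "pp = measure arc_unif B"
  define d where "d = real K - real C * pp"
  have d: "d > 0" using p C by (simp add: d_def pp_def field_simps)
  define q where "q = exp (-2 * d\<^sup>2 / C)"
  have up: "measure (MU (r*C)) {u\<in>space (MU (r*C)). r*K \<le> card {i\<in>{..<r*C}. u i \<in> B}} \<le> q ^ r"
    if r: "r > 0" for r :: nat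
  proof -
    let ?n = "r*C"
    let ?A = "{u\<in>space (MU ?n). r*K \<le> card {i\<in>{..<?n}. u i \<in> B}}"
    interpret P: prob_space "MU ?n" by (rule prob_space_MU)
    have n: "0 < ?n" using r C by simp
    have sub: "?A \<subseteq> {u\<in>space (MU ?n). real (card {i\<in>{..<?n}. u i \<in> B}) \<ge> ?n * pp + r * d}"
    proof
      fix u assume u: "u \<in> ?A"
      then have "r*K \<le> card {i\<in>{..<?n}. u i \<in> B}" by auto
      then have "real (r*K) \<le> real (card {i\<in>{..<?n}. u i \<in> B})" by (rule of_nat_mono)
      moreover have "real (r*K) = ?n * pp + r * d" by (simp add: d_def algebra_simps)
      ultimately show "u \<in> {u\<in>space (MU ?n). real (card {i\<in>{..<?n}. u i \<in> B}) \<ge> ?n * pp + r * d}"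
        using u by auto
    qed
    have "measure (MU ?n) ?A \<le>
          measure (MU ?n) {u\<in>space (MU ?n). real (card {i\<in>{..<?n}. u i \<in> B}) \<ge> ?n * pp + r * d}"
      using sub by (intro P.finite_measure_mono) (use B in measurable)
    also have "\<dots> \<le> exp (-2 * (r*d)\<^sup>2 / ?n)"
      using hoeffding_MU(2)[OF n B, of "r*d"] d unfolding pp_def by simp
    also have "\<dots> = q ^ r" unfolding q_def using exp_pow[OF r, of d C] by simp
    finally show ?thesis .
  qed
  have l2: "(\<lambda>r. q ^ r) \<longlonglongrightarrow> 0"
    unfolding q_def using d C by (intro pow_lim0) auto
  have l1: "(\<lambda>r. 0::real) \<longlonglongrightarrow> 0" by simp
  have e2: "eventually (\<lambda>r. measure (MU (r*C)) {u\<in>space (MU (r*C)). r*K \<le> card {i\<in>{..<r*C}. u i \<in> B}} \<le> q ^ r) sequentially"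
    using up by (intro eventually_sequentiallyI[of 1]) auto
  have e1: "eventually (\<lambda>r. 0 \<le> measure (MU (r*C)) {u\<in>space (MU (r*C)). r*K \<le> card {i\<in>{..<r*C}. u i \<in> B}}) sequentially"
    by (intro always_eventually allI measure_nonneg)
  show ?thesis by (rule tendsto_sandwich[OF e1 e2 l1 l2])
qed

lemma comp_meas_any:
  assumes "space M = UNIV"
  shows "(\<lambda>x. x j) \<in> measurable (PiM I (\<lambda>_. M)) M"
proof (cases "j \<in> I")
  case True then show ?thesis using measurable_component_singleton[of j I "\<lambda>_. M"] by simp
next
  case False
  then have "\<forall>u\<in>space (PiM I (\<lambda>_. M)). u j = undefined" by (auto simp: space_PiM PiE_def extensional_def)
  then show ?thesis using assms by (subst measurable_cong[where g="\<lambda>_. undefined"]) auto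
qed

lemma comp_meas_arc[measurable]: "(\<lambda>x. x j) \<in> measurable (PiM I (\<lambda>_. arc_unif)) arc_unif"
  by (rule comp_meas_any) simp

lemma comp_meas_unif[measurable]: "(\<lambda>x. x j) \<in> measurable (PiM I (\<lambda>_. unif01)) unif01"
  by (rule comp_meas_any) simp

lemma is_UC_alt: "is_UC C K y c S \<longleftrightarrow> S \<in> Pow {..<C} \<and> card S \<le> K \<and>
   (\<forall>T\<in>Pow {..<C}. card T \<le> K \<longrightarrow> (\<Sum>j\<in>T. y \<bullet> c j) \<le> (\<Sum>j\<in>S. y \<bullet> c j))"
  by (auto simp: is_UC_def)

lemma is_UC_cong:
  assumes "\<And>j. j < C \<Longrightarrow> c j = c' j"
  shows "is_UC C K y c S = is_UC C K y c' S"
proof -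
  have "(\<Sum>j\<in>T. y \<bullet> c j) = (\<Sum>j\<in>T. y \<bullet> c' j)" if "T \<subseteq> {..<C}" for T
    using that assms by (intro sum.cong) auto
  then show ?thesis unfolding is_UC_def by (metis order_refl)
qed

lemma In_set_cong: "(\<And>j. j < C \<Longrightarrow> c j = c' j) \<Longrightarrow> In_set C K c j = In_set C K c' j"
  unfolding In_set_def using is_UC_cong by blast

lemma Poss_set_cong: "(\<And>j. j < C \<Longrightarrow> c j = c' j) \<Longrightarrow> Poss_set C K c j = Poss_set C K c' j"
  unfolding Poss_set_def using is_UC_cong by blast

lemma In_set_borel: "In_set C K c j \<in> sets borel"
proof -
  have "In_set C K c j = {y\<in>space borel. \<forall>S\<in>Pow {..<C}. is_UC C K y c S \<longrightarrow> j \<in> S}"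
    unfolding In_set_def by (auto simp: is_UC_def)
  also have "\<dots> \<in> sets borel" unfolding is_UC_alt by measurable
  finally show ?thesis .
qed

lemma Poss_set_borel: "Poss_set C K c j \<in> sets borel"
proof -
  have "Poss_set C K c j = {y\<in>space borel. \<exists>S\<in>Pow {..<C}. is_UC C K y c S \<and> j \<in> S}"
    unfolding Poss_set_def by (auto simp: is_UC_def)
  also have "\<dots> \<in> sets borel" unfolding is_UC_alt by measurable
  finally show ?thesis .
qed

lemma real_card_sum:
  assumes "finite I"
  shows "real (card {l\<in>I. P l}) = (\<Sum>l\<in>I. if P l then 1 else 0)"
proof -
  have "(\<Sum>l\<in>I. if P l then 1 else 0 :: real) = (\<Sum>l\<in>{l\<in>I. P l}. 1)"
    using assms by (intro sum.mono_neutral_cong_right) auto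
  then show ?thesis by simp
qed

lemma Wset_borel: "Wset C K x v \<in> sets borel"
proof -
  have "Wset C K x v = {t\<in>space borel. t \<in> {0..1} \<and>
          (\<Sum>l\<in>{..<C}. if \<bar>t - x l\<bar> < \<bar>t - v\<bar> then 1 else 0 :: real) < real K}"
    unfolding Wset_def closer_def by (auto simp: real_card_sum[symmetric])
  also have "\<dots> \<in> sets borel" by measurable
  finally show ?thesis .
qed

lemma alks_alt:
  "at_least_K_stay C K U abar = {w\<in>space (model C U). \<exists>rec\<in>{..<U} \<rightarrow>\<^sub>E Pow {..<C}.
     (\<forall>i\<in>{..<U}. is_UC C K (fst w i) (snd w) (rec i)) \<and>
     K \<le> card {j\<in>{..<C}. abar \<le> card {i\<in>{..<U}. j \<in> rec i}}}"
proof (intro set_eqI iffI)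
  fix w assume "w \<in> at_least_K_stay C K U abar"
  then obtain u c rec where w: "w = (u, c)" "(u, c) \<in> space (model C U)"
    and r: "\<forall>i<U. is_UC C K (u i) c (rec i)" "K \<le> card {j\<in>{..<C}. abar \<le> card {i\<in>{..<U}. j \<in> rec i}}"
    unfolding at_least_K_stay_def by auto
  let ?r = "restrict rec {..<U}"
  have "?r \<in> {..<U} \<rightarrow>\<^sub>E Pow {..<C}" using r(1) by (auto simp: is_UC_def)
  moreover have "{i\<in>{..<U}. j \<in> ?r i} = {i\<in>{..<U}. j \<in> rec i}" for j by auto
  ultimately show "w \<in> {w\<in>space (model C U). \<exists>rec\<in>{..<U} \<rightarrow>\<^sub>E Pow {..<C}.
     (\<forall>i\<in>{..<U}. is_UC C K (fst w i) (snd w) (rec i)) \<and>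
     K \<le> card {j\<in>{..<C}. abar \<le> card {i\<in>{..<U}. j \<in> rec i}}}"
    using w r by (intro CollectI conjI bexI[of _ ?r]) auto
next
  fix w assume "w \<in> {w\<in>space (model C U). \<exists>rec\<in>{..<U} \<rightarrow>\<^sub>E Pow {..<C}.
     (\<forall>i\<in>{..<U}. is_UC C K (fst w i) (snd w) (rec i)) \<and>
     K \<le> card {j\<in>{..<C}. abar \<le> card {i\<in>{..<U}. j \<in> rec i}}}"
  then show "w \<in> at_least_K_stay C K U abar"
    unfolding at_least_K_stay_def by (cases w) auto
qed

lemma inner_meas: "(\<lambda>w. fst w i \<bullet> snd w j) \<in> borel_measurable (model C U)"
proof -
  have ms: "measurable M arc_unif = measurable M borel" for M :: "'z measure"
    by (rule measurable_cong_sets[OF refl sets_arc])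
  have "(\<lambda>w. fst w i) \<in> measurable (model C U) arc_unif" unfolding model_def
    by (rule measurable_compose[OF measurable_fst comp_meas_arc])
  moreover have "(\<lambda>w. snd w j) \<in> measurable (model C U) arc_unif" unfolding model_def
    by (rule measurable_compose[OF measurable_snd comp_meas_arc])
  ultimately show ?thesis unfolding ms by (rule borel_measurable_inner)
qed

lemma UC_pred: "{w\<in>space (model C U). is_UC C K (fst w i) (snd w) S} \<in> sets (model C U)"
proof -
  have "(\<lambda>w. \<Sum>j\<in>T. fst w i \<bullet> snd w j) \<in> borel_measurable (model C U)" for T
    by (intro borel_measurable_sum inner_meas)
  then show ?thesis unfolding is_UC_alt by measurable
qed

lemma alks_meas: "at_least_K_stay C K U abar \<in> sets (model C U)"
proof -
  let ?R = "{rec\<in>{..<U} \<rightarrow>\<^sub>E Pow {..<C}. K \<le> card {j\<in>{..<C}. abar \<le> card {i\<in>{..<U}. j \<in> rec i}}}"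
  have fin: "finite ?R" by (rule finite_subset[of _ "{..<U} \<rightarrow>\<^sub>E Pow {..<C}"]) (auto intro!: finite_PiE)
  have "at_least_K_stay C K U abar = {w\<in>space (model C U). \<exists>rec\<in>?R.
     \<forall>i\<in>{..<U}. is_UC C K (fst w i) (snd w) (rec i)}"
    unfolding alks_alt by blast
  also have "\<dots> \<in> sets (model C U)"
    using fin by (intro sets.sets_Collect_finite_Ex sets.sets_Collect_finite_All UC_pred) auto
  finally show ?thesis .
qed

lemma measure_finite_diff:
  assumes A: "A \<in> sets borel" and B: "B \<in> sets borel" and F: "finite F"
    and eq: "\<And>t. t \<notin> F \<Longrightarrow> (t \<in> A \<longleftrightarrow> t \<in> B)"
  shows "measure lborel A = measure lborel B"
proof (rule measure_eq_AE)
  have "AE t in lborel. t \<notin> F" by (rule AE_not_in[OF finite_imp_null_set_lborel[OF F]])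
  then show "AE t in lborel. t \<in> A \<longleftrightarrow> t \<in> B" by eventually_elim (use eq in auto)
qed (use A B in auto)

lemma p_eq:
  assumes KC: "K < C" and x01: "\<And>k. k < C \<Longrightarrow> x k \<in> {0..1}" and inj: "inj_on x {..<C}"
    and j: "j < C"
  shows "measure arc_unif (In_set C K (\<lambda>k. gm (x k)) j) = measure lborel (Wset C K x (x j))"
    and "measure arc_unif (Poss_set C K (\<lambda>k. gm (x k)) j) = measure lborel (Wset C K x (x j))"
proof -
  let ?F = "{t\<in>{0..1}. \<not> generic_t C x t}"
  have F: "finite ?F" by (rule finite_nongeneric[OF x01 inj])
  have gmb: "gm -` S \<inter> {0..1} \<in> sets borel" if "S \<in> sets borel" for S
    using measurable_sets_borel[OF gm_meas that] by auto
  have key: "t \<in> Wset C K x (x j) \<longleftrightarrow> t \<in> {0..1} \<and> rank_ok C K x t j" for t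
    by (simp add: Wset_def rank_ok_def closer_def)
  show "measure arc_unif (In_set C K (\<lambda>k. gm (x k)) j) = measure lborel (Wset C K x (x j))"
    unfolding measure_arc[OF In_set_borel]
  proof (rule measure_finite_diff[OF gmb[OF In_set_borel] Wset_borel F])
    fix t assume tF: "t \<notin> ?F"
    show "t \<in> gm -` In_set C K (\<lambda>k. gm (x k)) j \<inter> {0..1} \<longleftrightarrow> t \<in> Wset C K x (x j)"
    proof (cases "t \<in> {0..1}")
      case True
      then have g: "generic_t C x t" using tF by auto
      show ?thesis using In_Poss_gen(1)[OF KC x01 g j] key True by auto
    next
      case False then show ?thesis using key by auto
    qed
  qed
  show "measure arc_unif (Poss_set C K (\<lambda>k. gm (x k)) j) = measure lborel (Wset C K x (x j))"
    unfolding measure_arc[OF Poss_set_borel]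
  proof (rule measure_finite_diff[OF gmb[OF Poss_set_borel] Wset_borel F])
    fix t assume tF: "t \<notin> ?F"
    show "t \<in> gm -` Poss_set C K (\<lambda>k. gm (x k)) j \<inter> {0..1} \<longleftrightarrow> t \<in> Wset C K x (x j)"
    proof (cases "t \<in> {0..1}")
      case True
      then have g: "generic_t C x t" using tF by auto
      show ?thesis using In_Poss_gen(2)[OF KC x01 g j] key True by auto
    next
      case False then show ?thesis using key by auto
    qed
  qed
qed

lemma comp_meas_borel[measurable]: "(\<lambda>x. x j) \<in> measurable (PiM I (\<lambda>_. borel)) borel"
  by (rule comp_meas_any) simp

lemma emeasure_unif01_single: "emeasure unif01 {p} = 0"
proof -
  have "emeasure unif01 {p} = emeasure lborel ({p} \<inter> {0..1})" by (rule emeasure_unif01) simp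
  also have "\<dots> = 0" by (rule emeasure_lborel_countable) auto
  finally show ?thesis .
qed

lemma null_pair':
  fixes f :: "real \<Rightarrow> real" and I' :: "nat set"
  assumes f[measurable]: "f \<in> borel_measurable borel" and I: "finite I'" and jk: "j \<notin> I'" "k \<in> I'"
  shows "AE x in PiM (insert j I') (\<lambda>_. unif01). x j \<noteq> f (x k)"
proof -
  interpret P: product_prob_space "\<lambda>_::nat. unif01" by (intro product_prob_spaceI prob_space_unif01)
  define N where "N = {x\<in>space (PiM (insert j I') (\<lambda>_. unif01)). x j = f (x k)}"
  have N: "N \<in> sets (PiM (insert j I') (\<lambda>_. unif01))" unfolding N_def by measurable
  have kj: "k \<noteq> j" using jk by auto
  have "emeasure (PiM (insert j I') (\<lambda>_. unif01)) N = (\<integral>\<^sup>+x. indicator N x \<partial>PiM (insert j I') (\<lambda>_. unif01))"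
    using N by simp
  also have "\<dots> = (\<integral>\<^sup>+x. (\<integral>\<^sup>+y. indicator N (x(j := y)) \<partial>unif01) \<partial>PiM I' (\<lambda>_. unif01))"
    by (rule P.product_nn_integral_insert[OF I jk(1)]) (use N in simp)
  also have "\<dots> \<le> (\<integral>\<^sup>+x. (\<integral>\<^sup>+y. indicator {f (x k)} y \<partial>unif01) \<partial>PiM I' (\<lambda>_. unif01))"
  proof (intro nn_integral_mono)
    fix x y
    show "indicator N (x(j := y)) \<le> (indicator {f (x k)} y :: ennreal)"
      using kj by (cases "x(j := y) \<in> N") (auto simp: N_def)
  qed
  also have "\<dots> = 0" by (simp add: emeasure_unif01_single)
  finally have "emeasure (PiM (insert j I') (\<lambda>_. unif01)) N = 0" by simp
  then show ?thesis by (subst AE_iff_measurable[OF N]) (auto simp: N_def)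
qed

lemma null_pair:
  fixes f :: "real \<Rightarrow> real" and I :: "nat set"
  assumes f: "f \<in> borel_measurable borel" and I: "finite I" and jk: "j \<in> I" "k \<in> I" "j \<noteq> k"
  shows "AE x in PiM I (\<lambda>_. unif01). x j \<noteq> f (x k)"
proof -
  have e: "insert j (I - {j}) = I" using jk by auto
  have "AE x in PiM (insert j (I - {j})) (\<lambda>_. unif01). x j \<noteq> f (x k)"
    using jk I by (intro null_pair' f) auto
  then show ?thesis unfolding e .
qed

lemma AE_x01: "AE x in PiM I (\<lambda>_. unif01). x j \<in> {0..1}" if "j \<in> I"
proof (rule AE_PiM_component[where P="\<lambda>t. t \<in> {0..1}"])
  show "AE t in unif01. t \<in> {0..1}" unfolding unif01_def by (intro AE_uniform_measureI) auto
qed (use that prob_space_unif01 in auto)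

lemma AE_gen:
  fixes \<kappa> :: real
  shows "AE x in ostat_space C. (\<forall>j<C. x j \<in> {0..1}) \<and>
     (\<forall>j<C. \<forall>k<C. j \<noteq> k \<longrightarrow> x j \<noteq> x k \<and> x j \<noteq> 2*\<kappa> - x k \<and> x j \<noteq> (2 - 2*\<kappa>) - x k)"
proof -
  have a1: "AE x in ostat_space C. \<forall>j\<in>{..<C}. x j \<in> {0..1}"
    unfolding ostat_space_def by (intro AE_finite_allI AE_x01) auto
  have a2: "AE x in ostat_space C. \<forall>j\<in>{..<C}. \<forall>k\<in>{..<C}. j \<noteq> k \<longrightarrow>
      x j \<noteq> x k \<and> x j \<noteq> 2*\<kappa> - x k \<and> x j \<noteq> (2 - 2*\<kappa>) - x k"
  proof (intro AE_finite_allI)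
    fix j k assume jk: "j \<in> {..<C}" "k \<in> {..<C}"
    show "AE x in ostat_space C. j \<noteq> k \<longrightarrow> x j \<noteq> x k \<and> x j \<noteq> 2*\<kappa> - x k \<and> x j \<noteq> (2 - 2*\<kappa>) - x k"
    proof (cases "j = k")
      case False
      have "AE x in ostat_space C. x j \<noteq> (\<lambda>t. t) (x k)"
        unfolding ostat_space_def using jk False by (intro null_pair) auto
      moreover have "AE x in ostat_space C. x j \<noteq> (\<lambda>t. 2*\<kappa> - t) (x k)"
        unfolding ostat_space_def using jk False by (intro null_pair) auto
      moreover have "AE x in ostat_space C. x j \<noteq> (\<lambda>t. (2 - 2*\<kappa>) - t) (x k)"
        unfolding ostat_space_def using jk False by (intro null_pair) auto
      ultimately show ?thesis by eventually_elim auto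
    qed simp
  qed auto
  from a1 a2 show ?thesis by eventually_elim auto
qed

lemma sorted_nth_le_iff:
  assumes "sorted xs" "i < length xs"
  shows "xs ! i \<le> t \<longleftrightarrow> Suc i \<le> card {m. m < length xs \<and> xs ! m \<le> t}"
proof
  assume a: "xs ! i \<le> t"
  have "{..i} \<subseteq> {m. m < length xs \<and> xs ! m \<le> t}"
    using assms a by (auto intro: order.trans[OF sorted_nth_mono[OF assms(1)]])
  then have "card {..i} \<le> card {m. m < length xs \<and> xs ! m \<le> t}" by (intro card_mono) auto
  then show "Suc i \<le> card {m. m < length xs \<and> xs ! m \<le> t}" by simp
next
  assume a: "Suc i \<le> card {m. m < length xs \<and> xs ! m \<le> t}"
  show "xs ! i \<le> t"
  proof (rule ccontr)
    assume "\<not> xs ! i \<le> t"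
    then have "{m. m < length xs \<and> xs ! m \<le> t} \<subseteq> {..<i}"
      using sorted_nth_mono[OF assms(1), of i] by (force simp: not_le)
    then have "card {m. m < length xs \<and> xs ! m \<le> t} \<le> card {..<i}" by (intro card_mono) auto
    with a show False by simp
  qed
qed

lemma sY_le_iff:
  assumes "i < C"
  shows "sY C x i \<le> t \<longleftrightarrow> Suc i \<le> card {j. j < C \<and> x j \<le> t}"
proof -
  let ?xs = "sort (map x [0..<C])"
  have "sY C x i \<le> t \<longleftrightarrow> Suc i \<le> card {m. m < length ?xs \<and> ?xs ! m \<le> t}"
    unfolding sY_def using assms by (intro sorted_nth_le_iff) auto
  also have "card {m. m < length ?xs \<and> ?xs ! m \<le> t} = length (filter (\<lambda>v. v \<le> t) ?xs)"
    by (simp add: length_filter_conv_card)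
  also have "\<dots> = length (filter (\<lambda>v. v \<le> t) (map x [0..<C]))"
    by (simp add: filter_sort)
  also have "\<dots> = card {j. j < C \<and> x j \<le> t}"
    by (simp add: length_filter_conv_card) (intro arg_cong[where f=card] Collect_cong, auto)
  finally show ?thesis .
qed

lemma sY_meas[measurable]:
  assumes "i < C"
  shows "(\<lambda>x. sY C x i) \<in> borel_measurable (PiM I (\<lambda>_. unif01))"
proof (subst borel_measurable_iff_le, intro allI)
  fix t
  have "{x\<in>space (PiM I (\<lambda>_. unif01)). sY C x i \<le> t}
      = {x\<in>space (PiM I (\<lambda>_. unif01)). real (Suc i) \<le> (\<Sum>j\<in>{..<C}. if x j \<le> t then 1 else 0)}"
    using assms by (auto simp: sY_le_iff real_card_sum[symmetric] lessThan_def)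
  also have "\<dots> \<in> sets (PiM I (\<lambda>_. unif01))" by measurable
  finally show "{x\<in>space (PiM I (\<lambda>_. unif01)). sY C x i \<le> t} \<in> sets (PiM I (\<lambda>_. unif01))" .
qed

lemma ordstat_meas[measurable]:
  assumes "1 \<le> k" "k \<le> C"
  shows "(\<lambda>x. ordstat C x k) \<in> borel_measurable (PiM I (\<lambda>_. unif01))"
  unfolding ordstat_sY using assms by (intro sY_meas) simp

lemma (in incr) q_cases:
  assumes KC: "K < C" and CK: "C < 2*K" and Y01: "\<And>m. m < C \<Longrightarrow> Y m \<in> {0..1}" and m: "m < C"
  shows "(m + K < C \<and> measure lborel (Wset C K Y (Y m)) = (Y m + Y (m+K))/2) \<or>
         (K \<le> m \<and> measure lborel (Wset C K Y (Y m)) = 1 - (Y (m-K) + Y m)/2) \<or>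
         measure lborel (Wset C K Y (Y m)) = 1"
proof -
  consider "m + K < C" | "K \<le> m" | "m < K" "C \<le> m + K" by linarith
  then show ?thesis
  proof cases
    case 1
    have a: "0 \<le> (Y m + Y (m+K))/2" "(Y m + Y (m+K))/2 \<le> 1" using Y01[of m] Y01[of "m+K"] 1 by auto
    have "Wset C K Y (Y m) = {t\<in>{0..1}. t \<le> (Y m + Y (m+K))/2}" using W_left[OF KC CK 1] .
    also have "\<dots> = {0..(Y m + Y (m+K))/2}" using a by auto
    finally show ?thesis using a 1 by simp
  next
    case 2
    have "m - K < C" using m by simp
    then have a: "0 \<le> (Y (m-K) + Y m)/2" "(Y (m-K) + Y m)/2 \<le> 1" using Y01[of m] Y01[of "m-K"] 2 m by auto
    have "Wset C K Y (Y m) = {t\<in>{0..1}. (Y (m-K) + Y m)/2 \<le> t}" using W_right[OF KC CK 2 m] .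
    also have "\<dots> = {(Y (m-K) + Y m)/2..1}" using a by auto
    finally show ?thesis using a 2 by simp
  next
    case 3
    then show ?thesis using W_mid[OF KC CK 3] by simp
  qed
qed

definition Ev :: "nat \<Rightarrow> nat \<Rightarrow> (nat \<Rightarrow> real) \<Rightarrow> bool" where
  "Ev C K x \<longleftrightarrow>
     (ordstat C x 1 + ordstat C x (K + 1)) / 2 \<ge> real K / real C \<or>
     (ordstat C x (C - K) + ordstat C x C) / 2 \<le> 1 - real K / real C \<or>
     (\<exists>i\<in>{2..C-K}. (ordstat C x i + ordstat C x (K + i)) / 2 \<ge> real K / real C \<and>
             (ordstat C x (i - 1) + ordstat C x (K + i - 1)) / 2 \<le> 1 - real K / real C)"

lemma count_equiv:
  fixes x :: "nat \<Rightarrow> real"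
  assumes KC: "K < C" and CK: "C < 2*K" and x01: "\<And>j. j < C \<Longrightarrow> x j \<in> {0..1}"
    and inj: "inj_on x {..<C}"
    and gen: "\<And>j k. j < C \<Longrightarrow> k < C \<Longrightarrow> j \<noteq> k \<Longrightarrow>
               x j \<noteq> 2*(real K / real C) - x k \<and> x j \<noteq> (2 - 2*(real K / real C)) - x k"
  shows "K \<le> card {j\<in>{..<C}. measure lborel (Wset C K x (x j)) > real K / real C} \<longleftrightarrow> Ev C K x"
    and "\<And>j. j < C \<Longrightarrow> measure lborel (Wset C K x (x j)) \<noteq> real K / real C"
proof -
  define \<kappa> where "\<kappa> = real K / real C"
  define Y where "Y = sY C x"
  define n where "n = C - K"
  define a where "a i = (Y i + Y (i+K))/2" for i
  interpret incr C Y unfolding Y_def by (rule sY_incr[OF inj])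
  have C0: "0 < C" using KC by simp
  have kap: "1 - \<kappa> < \<kappa>" "\<kappa> < 1"
  proof -
    have "real C < 2 * real K" using CK by linarith
    then have "1/2 < \<kappa>" using C0 unfolding \<kappa>_def by (simp add: field_simps)
    then show "1 - \<kappa> < \<kappa>" by simp
    show "\<kappa> < 1" using KC C0 unfolding \<kappa>_def by simp
  qed
  have Y01: "\<And>m. m < C \<Longrightarrow> Y m \<in> {0..1}" unfolding Y_def by (rule sY_01[OF x01])
  have Yimg: "\<exists>j<C. Y m = x j" if "m < C" for m
  proof -
    have "Y m \<in> Y ` {..<C}" using that by auto
    then have "Y m \<in> x ` {..<C}" unfolding Y_def by (simp only: sY_image)
    then show ?thesis by auto
  qed
  have agen: "a i \<noteq> \<kappa> \<and> a i \<noteq> 1 - \<kappa>" if "i < n" for i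
  proof -
    have i: "i < C" "i + K < C" using that n_def by auto
    obtain j1 where j1: "j1 < C" "Y i = x j1" using Yimg[OF i(1)] by blast
    obtain j2 where j2: "j2 < C" "Y (i+K) = x j2" using Yimg[OF i(2)] by blast
    have "Y i < Y (i+K)" using mono[of i "i+K"] i KC CK by simp
    then have "j1 \<noteq> j2" using j1 j2 by auto
    then have "x j1 \<noteq> 2*\<kappa> - x j2 \<and> x j1 \<noteq> (2 - 2*\<kappa>) - x j2" using gen[OF j1(1) j2(1)] \<kappa>_def by simp
    then show ?thesis unfolding a_def using j1 j2 by auto
  qed
  have WY: "Wset C K x v = Wset C K Y v" for v unfolding Y_def by (rule Wset_sY[OF inj])
  have iY: "inj_on Y {..<C}" by (rule incr_inj) (rule incr_axioms)
  have cnt: "card {j\<in>{..<C}. measure lborel (Wset C K x (x j)) > \<kappa>}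
      = card {m\<in>{..<C}. measure lborel (Wset C K Y (Y m)) > \<kappa>}"
    unfolding WY
    by (rule card_trick[of x "{..<C}" Y "{..<C}" "\<lambda>v. measure lborel (Wset C K Y v) > \<kappa>"])
       (use inj iY sY_image[of C x] in \<open>auto simp: Y_def\<close>)
  have amono: "a i \<le> a j" if "i \<le> j" "j < n" for i j
  proof -
    have "j < C" "j + K < C" using that n_def by auto
    then have "Y i \<le> Y j" "Y (i+K) \<le> Y (j+K)" using that mono_le[of i j] mono_le[of "i+K" "j+K"] by auto
    then show ?thesis unfolding a_def by simp
  qed
  have n1: "1 \<le> n" using KC n_def by simp
  have "K \<le> card {m\<in>{..<C}. measure lborel (Wset C K Y (Y m)) > \<kappa>} \<longleftrightarrow> (\<forall>i<n. a i > \<kappa> \<or> a i < 1 - \<kappa>)"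
    unfolding \<kappa>_def a_def n_def by (rule count_iff[OF KC CK Y01])
  also have "\<dots> \<longleftrightarrow> (a 0 \<ge> \<kappa> \<or> a (n-1) \<le> 1 - \<kappa> \<or> (\<exists>i\<in>{2..n}. a (i-1) \<ge> \<kappa> \<and> a (i-2) \<le> 1 - \<kappa>))"
    by (rule Ev_a[OF n1 amono kap(1) agen])
  also have "\<dots> \<longleftrightarrow> Ev C K x"
  proof -
    have e1: "(ordstat C x 1 + ordstat C x (K + 1)) / 2 = a 0" by (simp add: ordstat_sY a_def Y_def)
    have e2: "(ordstat C x n + ordstat C x C) / 2 = a (n-1)"
      using KC by (simp add: ordstat_sY a_def Y_def n_def)
    have e3: "(ordstat C x i + ordstat C x (K + i)) / 2 = a (i-1)" if "i \<in> {2..n}" for i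
      using that by (simp add: ordstat_sY a_def Y_def add.commute)
    have e4: "(ordstat C x (i - 1) + ordstat C x (K + i - 1)) / 2 = a (i-2)" if "i \<in> {2..n}" for i
    proof -
      have "K + i - 1 - 1 = i - 2 + K" "i - 1 - 1 = i - 2" using that by auto
      then show ?thesis by (simp add: ordstat_sY a_def Y_def)
    qed
    have bx: "(\<exists>i\<in>{2..n}. (ordstat C x i + ordstat C x (K + i)) / 2 \<ge> \<kappa> \<and>
             (ordstat C x (i - 1) + ordstat C x (K + i - 1)) / 2 \<le> 1 - \<kappa>)
       \<longleftrightarrow> (\<exists>i\<in>{2..n}. a (i-1) \<ge> \<kappa> \<and> a (i-2) \<le> 1 - \<kappa>)"
      by (intro bex_cong refl) (simp only: e3 e4)
    have "Ev C K x \<longleftrightarrow> (ordstat C x 1 + ordstat C x (K + 1)) / 2 \<ge> \<kappa> \<or>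
       (ordstat C x n + ordstat C x C) / 2 \<le> 1 - \<kappa> \<or>
       (\<exists>i\<in>{2..n}. (ordstat C x i + ordstat C x (K + i)) / 2 \<ge> \<kappa> \<and>
             (ordstat C x (i - 1) + ordstat C x (K + i - 1)) / 2 \<le> 1 - \<kappa>)"
      unfolding Ev_def \<kappa>_def n_def ..
    then show ?thesis unfolding e1 e2 bx by simp
  qed
  finally show "K \<le> card {j\<in>{..<C}. measure lborel (Wset C K x (x j)) > real K / real C} \<longleftrightarrow> Ev C K x"
    using cnt unfolding \<kappa>_def by simp
  fix j assume j: "j < C"
  obtain m where m: "m < C" "x j = Y m"
  proof -
    have "x j \<in> Y ` {..<C}" using j unfolding Y_def sY_image by auto
    then show ?thesis using that by auto
  qed
  have eqm: "measure lborel (Wset C K x (x j)) = measure lborel (Wset C K Y (Y m))" using m WY by simp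
  have qc: "(m + K < C \<and> measure lborel (Wset C K Y (Y m)) = (Y m + Y (m+K))/2) \<or>
         (K \<le> m \<and> measure lborel (Wset C K Y (Y m)) = 1 - (Y (m-K) + Y m)/2) \<or>
         measure lborel (Wset C K Y (Y m)) = 1"
    by (rule q_cases[OF KC CK]) (use Y01 m in auto)
  moreover have "measure lborel (Wset C K Y (Y m)) \<noteq> \<kappa>"
    using qc
  proof (elim disjE conjE)
    assume "m + K < C" "measure lborel (Wset C K Y (Y m)) = (Y m + Y (m+K))/2"
    moreover have "m < n" using \<open>m + K < C\<close> n_def by simp
    ultimately show ?thesis using agen[of m] unfolding a_def by auto
  next
    assume "K \<le> m" "measure lborel (Wset C K Y (Y m)) = 1 - (Y (m-K) + Y m)/2"
    moreover have "m - K < n" "m - K + K = m" using \<open>K \<le> m\<close> m n_def by auto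
    ultimately show ?thesis using agen[of "m-K"] a_def by auto
  next
    assume "measure lborel (Wset C K Y (Y m)) = 1"
    then show ?thesis using kap by simp
  qed
  ultimately show "measure lborel (Wset C K x (x j)) \<noteq> real K / real C" using eqm unfolding \<kappa>_def by simp
qed

lemma space_model: "space (model C U) = space (MU U) \<times> space (PiM {..<C} (\<lambda>_. arc_unif))"
  unfolding model_def by (simp add: space_pair_measure)

lemma compose_space: "compose {..<C} gm x \<in> space (PiM {..<C} (\<lambda>_. arc_unif))"
  by (auto simp: space_PiM compose_def)

lemma pointwise:
  fixes x :: "nat \<Rightarrow> real"
  assumes KC: "K < C" and CK: "C < 2*K" and x01: "\<And>j. j < C \<Longrightarrow> x j \<in> {0..1}"
    and inj: "inj_on x {..<C}"
    and gen: "\<And>j k. j < C \<Longrightarrow> k < C \<Longrightarrow> j \<noteq> k \<Longrightarrow>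
               x j \<noteq> 2*(real K / real C) - x k \<and> x j \<noteq> (2 - 2*(real K / real C)) - x k"
  shows "(\<lambda>r. measure (MU (r*C)) {u\<in>space (MU (r*C)). (u, compose {..<C} gm x) \<in> at_least_K_stay C K (r*C) (r*K)})
           \<longlonglongrightarrow> (if Ev C K x then 1 else 0)"
proof -
  define \<kappa> where "\<kappa> = real K / real C"
  define c where "c = compose {..<C} gm x"
  have C0: "0 < C" using KC by simp
  have cc: "c k = gm (x k)" if "k < C" for k using that by (simp add: c_def compose_def)
  have cspace: "c \<in> space (PiM {..<C} (\<lambda>_. arc_unif))" unfolding c_def by (rule compose_space)
  define In where "In j = In_set C K c j" for j
  define Po where "Po j = Poss_set C K c j" for j
  define p where "p j = measure lborel (Wset C K x (x j))" for j
  have pIn: "measure arc_unif (In j) = p j" if "j < C" for j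
    unfolding In_def p_def using In_set_cong[of C c "\<lambda>k. gm (x k)" K j] cc p_eq(1)[OF KC x01 inj that] by simp
  have pPo: "measure arc_unif (Po j) = p j" if "j < C" for j
    unfolding Po_def p_def using Poss_set_cong[of C c "\<lambda>k. gm (x k)" K j] cc p_eq(2)[OF KC x01 inj that] by simp
  have Inb: "In j \<in> sets borel" for j unfolding In_def by (rule In_set_borel)
  have Pob: "Po j \<in> sets borel" for j unfolding Po_def by (rule Poss_set_borel)
  define G where "G = {j\<in>{..<C}. p j > \<kappa>}"
  have EvG: "Ev C K x \<longleftrightarrow> K \<le> card G"
    unfolding G_def p_def \<kappa>_def using count_equiv(1)[OF KC CK x01 inj gen] by simp
  have pne: "p j \<noteq> \<kappa>" if "j < C" for j
    unfolding p_def \<kappa>_def using count_equiv(2)[OF KC CK x01 inj gen that] .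
  define Sec where "Sec r = {u\<in>space (MU (r*C)). (u, c) \<in> at_least_K_stay C K (r*C) (r*K)}" for r
  have Sec_meas: "Sec r \<in> sets (MU (r*C))" for r
  proof -
    have "Sec r = (\<lambda>u. (u, c)) -` at_least_K_stay C K (r*C) (r*K) \<inter> space (MU (r*C))"
      unfolding Sec_def by auto
    also have "\<dots> \<in> sets (MU (r*C))"
      by (rule measurable_sets[OF measurable_Pair2'[OF cspace] alks_meas[unfolded model_def]])
    finally show ?thesis .
  qed
  have Sec_iff: "u \<in> Sec r \<longleftrightarrow> u \<in> space (MU (r*C)) \<and> (\<exists>rec. (\<forall>i<r*C. is_UC C K (u i) c (rec i)) \<and>
        K \<le> card {j\<in>{..<C}. r*K \<le> card {i\<in>{..<r*C}. j \<in> rec i}})" for u r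
    unfolding Sec_def at_least_K_stay_def space_model using cspace by auto
  define f where "f r = measure (MU (r*C)) (Sec r)" for r
  show ?thesis
  proof (cases "Ev C K x")
    case True
    then have KG: "K \<le> card G" using EvG by simp
    define A where "A j r = {u\<in>space (MU (r*C)). r*K \<le> card {i\<in>{..<r*C}. u i \<in> In j}}" for j r
    have A_meas: "A j r \<in> sets (MU (r*C))" for j r unfolding A_def by (rule count_set_meas[OF Inb])
    have low: "1 - (\<Sum>j\<in>G. 1 - measure (MU (r*C)) (A j r)) \<le> f r" for r
    proof -
      interpret P: prob_space "MU (r*C)" by (rule prob_space_MU)
      let ?L = "{u\<in>space (MU (r*C)). \<forall>j\<in>G. u \<in> A j r}"
      have L_meas: "?L \<in> sets (MU (r*C))"
        using A_meas by (intro sets.sets_Collect_finite_All) (auto simp: G_def)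
      have LS: "?L \<subseteq> Sec r"
      proof
        fix u assume u: "u \<in> ?L"
        define rec where "rec i = (SOME S. is_UC C K (u i) c S)" for i
        have rec: "is_UC C K (u i) c (rec i)" for i
          unfolding rec_def using UC_exists by (rule someI_ex)
        have "G \<subseteq> {j\<in>{..<C}. r*K \<le> card {i\<in>{..<r*C}. j \<in> rec i}}"
        proof
          fix j assume j: "j \<in> G"
          have "{i\<in>{..<r*C}. u i \<in> In j} \<subseteq> {i\<in>{..<r*C}. j \<in> rec i}"
            using rec unfolding In_def In_set_def by auto
          then have "card {i\<in>{..<r*C}. u i \<in> In j} \<le> card {i\<in>{..<r*C}. j \<in> rec i}"
            by (intro card_mono) auto
          moreover have "r*K \<le> card {i\<in>{..<r*C}. u i \<in> In j}" using u j unfolding A_def by auto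
          ultimately show "j \<in> {j\<in>{..<C}. r*K \<le> card {i\<in>{..<r*C}. j \<in> rec i}}"
            using j G_def by auto
        qed
        then have "card G \<le> card {j\<in>{..<C}. r*K \<le> card {i\<in>{..<r*C}. j \<in> rec i}}"
          by (intro card_mono) auto
        then have kk: "K \<le> card {j\<in>{..<C}. r*K \<le> card {i\<in>{..<r*C}. j \<in> rec i}}" using KG by linarith
        have "u \<in> space (MU (r*C))" using u by auto
        then show "u \<in> Sec r" unfolding Sec_iff using rec kk by blast
      qed
      have "space (MU (r*C)) - ?L = (\<Union>j\<in>G. space (MU (r*C)) - A j r)" by auto
      then have "measure (MU (r*C)) (space (MU (r*C)) - ?L) \<le> (\<Sum>j\<in>G. measure (MU (r*C)) (space (MU (r*C)) - A j r))"
        using A_meas by (simp only:) (intro P.finite_measure_subadditive_finite, auto simp: G_def)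
      also have "\<dots> = (\<Sum>j\<in>G. 1 - measure (MU (r*C)) (A j r))"
        using A_meas by (intro sum.cong refl P.prob_compl)
      finally have "1 - measure (MU (r*C)) ?L \<le> (\<Sum>j\<in>G. 1 - measure (MU (r*C)) (A j r))"
        using P.prob_compl[OF L_meas] by simp
      moreover have "measure (MU (r*C)) ?L \<le> f r"
        unfolding f_def using LS Sec_meas by (intro P.finite_measure_mono) auto
      ultimately show ?thesis by simp
    qed
    have "(\<lambda>r. 1 - (\<Sum>j\<in>G. 1 - measure (MU (r*C)) (A j r))) \<longlonglongrightarrow> 1 - (\<Sum>j\<in>G. 1 - 1)"
    proof (intro tendsto_diff tendsto_const tendsto_sum)
      fix j assume j: "j \<in> G"
      then have "measure arc_unif (In j) > real K / real C" using pIn[of j] G_def \<kappa>_def by auto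
      then show "(\<lambda>r. measure (MU (r*C)) (A j r)) \<longlonglongrightarrow> 1"
        unfolding A_def by (rule conc_hi[OF C0 Inb])
    qed
    then have l1: "(\<lambda>r. 1 - (\<Sum>j\<in>G. 1 - measure (MU (r*C)) (A j r))) \<longlonglongrightarrow> 1" by simp
    have e2: "\<forall>\<^sub>F r in sequentially. f r \<le> 1"
      unfolding f_def by (intro always_eventually allI prob_space.prob_le_1[OF prob_space_MU])
    have "f \<longlonglongrightarrow> 1"
      by (rule tendsto_sandwich[OF always_eventually[OF allI[OF low]] e2 l1 tendsto_const])
    then show ?thesis using True unfolding f_def Sec_def c_def by simp
  next
    case False
    then have KG: "card G < K" using EvG by simp
    define B where "B j r = {u\<in>space (MU (r*C)). r*K \<le> card {i\<in>{..<r*C}. u i \<in> Po j}}" for j r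
    have B_meas: "B j r \<in> sets (MU (r*C))" for j r unfolding B_def by (rule count_set_meas[OF Pob])
    have up: "f r \<le> (\<Sum>j\<in>{..<C} - G. measure (MU (r*C)) (B j r))" for r
    proof -
      interpret P: prob_space "MU (r*C)" by (rule prob_space_MU)
      have SB: "Sec r \<subseteq> (\<Union>j\<in>{..<C} - G. B j r)"
      proof
        fix u assume "u \<in> Sec r"
        then obtain rec where u: "u \<in> space (MU (r*C))" and rec: "\<forall>i<r*C. is_UC C K (u i) c (rec i)"
          and cK: "K \<le> card {j\<in>{..<C}. r*K \<le> card {i\<in>{..<r*C}. j \<in> rec i}}"
          unfolding Sec_iff by blast
        let ?J = "{j\<in>{..<C}. r*K \<le> card {i\<in>{..<r*C}. j \<in> rec i}}"
        have "\<not> ?J \<subseteq> G"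
        proof
          assume "?J \<subseteq> G"
          then have "card ?J \<le> card G" by (intro card_mono) (auto simp: G_def)
          with cK KG show False by simp
        qed
        then obtain j where j: "j \<in> ?J" "j \<notin> G" by blast
        have "{i\<in>{..<r*C}. j \<in> rec i} \<subseteq> {i\<in>{..<r*C}. u i \<in> Po j}"
          using rec unfolding Po_def Poss_set_def by auto
        then have "card {i\<in>{..<r*C}. j \<in> rec i} \<le> card {i\<in>{..<r*C}. u i \<in> Po j}"
          by (intro card_mono) auto
        then have "u \<in> B j r" using j u unfolding B_def by auto
        then show "u \<in> (\<Union>j\<in>{..<C} - G. B j r)" using j by auto
      qed
      have "f r \<le> measure (MU (r*C)) (\<Union>j\<in>{..<C} - G. B j r)"
        unfolding f_def using SB B_meas by (intro P.finite_measure_mono) auto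
      also have "\<dots> \<le> (\<Sum>j\<in>{..<C} - G. measure (MU (r*C)) (B j r))"
        using B_meas by (intro P.finite_measure_subadditive_finite) auto
      finally show ?thesis .
    qed
    have l2: "(\<lambda>r. \<Sum>j\<in>{..<C} - G. measure (MU (r*C)) (B j r)) \<longlonglongrightarrow> (\<Sum>j\<in>{..<C} - G. 0)"
    proof (intro tendsto_sum)
      fix j assume j: "j \<in> {..<C} - G"
      then have "p j < \<kappa>" using pne[of j] G_def by auto
      then have "measure arc_unif (Po j) < real K / real C" using pPo[of j] j \<kappa>_def by auto
      then show "(\<lambda>r. measure (MU (r*C)) (B j r)) \<longlonglongrightarrow> 0"
        unfolding B_def by (rule conc_lo[OF C0 Pob])
    qed
    have e1: "\<forall>\<^sub>F r in sequentially. 0 \<le> f r" unfolding f_def by (intro always_eventually allI measure_nonneg)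
    have "f \<longlonglongrightarrow> 0"
      by (rule tendsto_sandwich[OF e1 always_eventually[OF allI[OF up]] tendsto_const]) (use l2 in simp)
    then show ?thesis using False unfolding f_def Sec_def c_def by simp
  qed
qed

lemma fubini_measure:
  assumes M1: "prob_space M1" and M2: "prob_space M2" and A: "A \<in> sets (M1 \<Otimes>\<^sub>M M2)"
  shows "measure (M1 \<Otimes>\<^sub>M M2) A = (\<integral>y. measure M1 {x\<in>space M1. (x, y) \<in> A} \<partial>M2)"
    and "(\<lambda>y. measure M1 {x\<in>space M1. (x, y) \<in> A}) \<in> borel_measurable M2"
proof -
  interpret P1: prob_space M1 by fact
  interpret P2: prob_space M2 by fact
  interpret P: pair_sigma_finite M1 M2 ..
  have sec: "(\<lambda>x. (x, y)) -` A = {x\<in>space M1. (x, y) \<in> A}" if "y \<in> space M2" for y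
    using sets.sets_into_space[OF A] that by (auto simp: space_pair_measure)
  have em: "(\<lambda>y. emeasure M1 ((\<lambda>x. (x, y)) -` A)) \<in> borel_measurable M2"
    by (rule P.measurable_emeasure_Pair2[OF A])
  have eq: "measure M1 {x\<in>space M1. (x, y) \<in> A} = enn2real (emeasure M1 ((\<lambda>x. (x, y)) -` A))"
    if "y \<in> space M2" for y
    using sec[OF that] by (simp add: measure_def)
  show meas: "(\<lambda>y. measure M1 {x\<in>space M1. (x, y) \<in> A}) \<in> borel_measurable M2"
    by (subst measurable_cong[OF eq]) (auto intro: borel_measurable_enn2real[OF em])
  have "emeasure (M1 \<Otimes>\<^sub>M M2) A = (\<integral>\<^sup>+y. emeasure M1 ((\<lambda>x. (x, y)) -` A) \<partial>M2)"
    by (rule P.emeasure_pair_measure_alt2[OF A])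
  also have "\<dots> = (\<integral>\<^sup>+y. ennreal (measure M1 {x\<in>space M1. (x, y) \<in> A}) \<partial>M2)"
    by (intro nn_integral_cong) (simp add: sec P1.emeasure_eq_measure)
  finally have e: "emeasure (M1 \<Otimes>\<^sub>M M2) A = (\<integral>\<^sup>+y. ennreal (measure M1 {x\<in>space M1. (x, y) \<in> A}) \<partial>M2)" .
  have "(\<integral>y. measure M1 {x\<in>space M1. (x, y) \<in> A} \<partial>M2)
      = enn2real (\<integral>\<^sup>+y. ennreal (measure M1 {x\<in>space M1. (x, y) \<in> A}) \<partial>M2)"
    by (rule integral_eq_nn_integral[OF meas]) auto
  then show "measure (M1 \<Otimes>\<^sub>M M2) A = (\<integral>y. measure M1 {x\<in>space M1. (x, y) \<in> A} \<partial>M2)"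
    using e by (simp add: measure_def)
qed

lemma gm_meas_ua: "gm \<in> measurable unif01 arc_unif"
  using gm_meas by (simp only: measurable_cong_sets[OF sets_unif01 sets_arc])

lemma compose_meas: "compose {..<C} gm \<in> measurable (ostat_space C) (PiM {..<C} (\<lambda>_. arc_unif))"
proof -
  have "(\<lambda>x. \<lambda>i\<in>{..<C}. gm (x i)) \<in> measurable (ostat_space C) (PiM {..<C} (\<lambda>_. arc_unif))"
  proof (rule measurable_restrict)
    fix i :: nat
    have "(\<lambda>x. x i) \<in> measurable (ostat_space C) unif01"
      unfolding ostat_space_def by (rule comp_meas_unif)
    then show "(\<lambda>x. gm (x i)) \<in> measurable (ostat_space C) arc_unif"
      using gm_meas_ua by (rule measurable_compose)
  qed
  moreover have "compose {..<C} gm = (\<lambda>x. \<lambda>i\<in>{..<C}. gm (x i))"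
    by (rule ext) (simp add: compose_def)
  ultimately show ?thesis by simp
qed

lemma MC_distr: "distr (ostat_space C) (PiM {..<C} (\<lambda>_. arc_unif)) (compose {..<C} gm) = PiM {..<C} (\<lambda>_. arc_unif)"
proof -
  have "distr (ostat_space C) (PiM {..<C} (\<lambda>_. arc_unif)) (compose {..<C} gm)
      = PiM {..<C} (\<lambda>i. distr unif01 arc_unif gm)"
    unfolding ostat_space_def
    by (rule distr_PiM_finite_prob_space') (auto simp: prob_space_unif01 prob_space_arc gm_meas_ua)
  also have "distr unif01 arc_unif gm = arc_unif"
  proof -
    have "distr unif01 arc_unif gm = distr unif01 borel gm" by (rule distr_cong) auto
    then show ?thesis using arc_unif_eq by simp
  qed
  finally show ?thesis .
qed

lemma os_conv:
  fixes x :: "nat \<Rightarrow> real"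
  assumes KC: "K < C"
  defines "a \<equiv> \<lambda>j. (sY C x j + sY C x (j+K))/2"
  shows "(ordstat C x 1 + ordstat C x (K + 1)) / 2 = a 0"
    and "(ordstat C x (C - K) + ordstat C x C) / 2 = a (C - K - 1)"
    and "\<And>i. i \<in> {2..C-K} \<Longrightarrow> (ordstat C x i + ordstat C x (K + i)) / 2 = a (i-1)"
    and "\<And>i. i \<in> {2..C-K} \<Longrightarrow> (ordstat C x (i - 1) + ordstat C x (K + i - 1)) / 2 = a (i-2)"
proof -
  show "(ordstat C x 1 + ordstat C x (K + 1)) / 2 = a 0" by (simp add: ordstat_sY a_def)
  have "C - K - 1 + K = C - 1" using KC by simp
  then show "(ordstat C x (C - K) + ordstat C x C) / 2 = a (C - K - 1)"
    by (simp add: ordstat_sY a_def)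
  fix i assume i: "i \<in> {2..C-K}"
  then show "(ordstat C x i + ordstat C x (K + i)) / 2 = a (i-1)"
    by (simp add: ordstat_sY a_def add.commute)
  have "K + i - 1 - 1 = i - 2 + K" "i - 1 - 1 = i - 2" using i by auto
  then show "(ordstat C x (i - 1) + ordstat C x (K + i - 1)) / 2 = a (i-2)"
    by (simp add: ordstat_sY a_def)
qed

lemma a_mono_all:
  assumes "j \<le> j'" "j' + K < C"
  shows "(sY C x j + sY C x (j+K))/2 \<le> (sY C x j' + sY C x (j'+K))/2"
  using sY_mono[of j j' C x] sY_mono[of "j+K" "j'+K" C x] assms by auto

lemma ge_set: "f \<in> borel_measurable M \<Longrightarrow> {x\<in>space M. (c::real) \<le> f x} \<in> sets M"
proof -
  assume f: "f \<in> borel_measurable M"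
  have "{x\<in>space M. c \<le> f x} = f -` {c..} \<inter> space M" by auto
  also have "\<dots> \<in> sets M" by (rule measurable_sets[OF f]) simp
  finally show ?thesis .
qed

lemma le_set: "f \<in> borel_measurable M \<Longrightarrow> {x\<in>space M. f x \<le> (c::real)} \<in> sets M"
proof -
  assume f: "f \<in> borel_measurable M"
  have "{x\<in>space M. f x \<le> c} = f -` {..c} \<inter> space M" by auto
  also have "\<dots> \<in> sets M" by (rule measurable_sets[OF f]) simp
  finally show ?thesis .
qed

lemma rhs_sum:
  assumes KC: "K < C" and CK: "C < 2*K"
  shows "measure (ostat_space C) {x\<in>space (ostat_space C). Ev C K x} =
      (\<Sum>i=2..C-K. measure (ostat_space C)
          {x \<in> space (ostat_space C).
             (ordstat C x i + ordstat C x (K + i)) / 2 \<ge> real K / real C \<and>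
             (ordstat C x (i - 1) + ordstat C x (K + i - 1)) / 2 \<le> 1 - real K / real C})
     + measure (ostat_space C)
          {x \<in> space (ostat_space C). (ordstat C x 1 + ordstat C x (K + 1)) / 2 \<ge> real K / real C}
     + measure (ostat_space C)
          {x \<in> space (ostat_space C). (ordstat C x (C - K) + ordstat C x C) / 2 \<le> 1 - real K / real C}"
proof -
  define \<kappa> where "\<kappa> = real K / real C"
  define OS where "OS = ostat_space C"
  define n where "n = C - K"
  define a where "a = (\<lambda>x j. (sY C x j + sY C x (j+K))/2)"
  define S1 where "S1 = {x \<in> space OS. (ordstat C x 1 + ordstat C x (K + 1)) / 2 \<ge> \<kappa>}"
  define S3 where "S3 = {x \<in> space OS. (ordstat C x (C - K) + ordstat C x C) / 2 \<le> 1 - \<kappa>}"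
  define M where "M i = {x \<in> space OS. (ordstat C x i + ordstat C x (K + i)) / 2 \<ge> \<kappa> \<and>
             (ordstat C x (i - 1) + ordstat C x (K + i - 1)) / 2 \<le> 1 - \<kappa>}" for i
  interpret P: prob_space OS unfolding OS_def ostat_space_def by (intro prob_space_PiM prob_space_unif01)
  have C0: "0 < C" using KC by simp
  have kap: "1 - \<kappa> < \<kappa>"
  proof -
    have "real C < 2 * real K" using CK by linarith
    then have "1/2 < \<kappa>" using C0 unfolding \<kappa>_def by (simp add: field_simps)
    then show ?thesis by simp
  qed
  have n1: "1 \<le> n" using KC n_def by simp
  have om: "(\<lambda>x. ordstat C x k) \<in> borel_measurable OS" if "1 \<le> k" "k \<le> C" for k
    unfolding OS_def ostat_space_def using that by (rule ordstat_meas)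
  have pm: "(\<lambda>x. (ordstat C x k + ordstat C x l) / 2) \<in> borel_measurable OS"
    if "1 \<le> k" "k \<le> C" "1 \<le> l" "l \<le> C" for k l
    using om[OF that(1,2)] om[OF that(3,4)] by measurable
  have S1m: "S1 \<in> sets OS" unfolding S1_def using KC by (intro ge_set pm) auto
  have S3m: "S3 \<in> sets OS" unfolding S3_def using KC by (intro le_set pm) auto
  have Mm: "M i \<in> sets OS" if "i \<in> {2..n}" for i
  proof -
    have "M i = {x \<in> space OS. (ordstat C x i + ordstat C x (K + i)) / 2 \<ge> \<kappa>} \<inter>
                {x \<in> space OS. (ordstat C x (i - 1) + ordstat C x (K + i - 1)) / 2 \<le> 1 - \<kappa>}"
      unfolding M_def by auto
    also have "\<dots> \<in> sets OS" using that n_def by (intro sets.Int ge_set le_set pm) auto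
    finally show ?thesis .
  qed
  have S1a: "x \<in> S1 \<longleftrightarrow> x \<in> space OS \<and> a x 0 \<ge> \<kappa>" for x
  proof -
    have e: "(ordstat C x 1 + ordstat C x (K + 1)) / 2 = a x 0"
      using os_conv(1)[OF KC, of x] unfolding a_def by simp
    show ?thesis unfolding S1_def mem_Collect_eq e by (rule refl)
  qed
  have S3a: "x \<in> S3 \<longleftrightarrow> x \<in> space OS \<and> a x (n - 1) \<le> 1 - \<kappa>" for x
  proof -
    have e: "(ordstat C x (C - K) + ordstat C x C) / 2 = a x (n - 1)"
      using os_conv(2)[OF KC, of x] unfolding a_def n_def by simp
    show ?thesis unfolding S3_def mem_Collect_eq e by (rule refl)
  qed
  have Ma: "x \<in> M i \<longleftrightarrow> x \<in> space OS \<and> a x (i-1) \<ge> \<kappa> \<and> a x (i-2) \<le> 1 - \<kappa>" if "i \<in> {2..n}" for x i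
  proof -
    have e1: "(ordstat C x i + ordstat C x (K + i)) / 2 = a x (i-1)"
      using os_conv(3)[OF KC, of i x] that unfolding a_def n_def by simp
    have e2: "(ordstat C x (i - 1) + ordstat C x (K + i - 1)) / 2 = a x (i-2)"
      using os_conv(4)[OF KC, of i x] that unfolding a_def n_def by simp
    show ?thesis unfolding M_def mem_Collect_eq e1 e2 by (rule refl)
  qed
  have amono: "a x j \<le> a x j'" if "j \<le> j'" "j' < n" for x j j'
    unfolding a_def using a_mono_all[of j j' K C x] that n_def by simp
  have disj: "disjoint_family_on M {2..n}"
  proof (unfold disjoint_family_on_def, intro ballI impI set_eqI iffI)
    fix i j x assume ij: "i \<in> {2..n}" "j \<in> {2..n}" "i \<noteq> j" and x: "x \<in> M i \<inter> M j"
    show "x \<in> {}"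
    proof (cases "i < j")
      case True
      have "a x (i-1) \<le> a x (j-2)" using True ij by (intro amono) auto
      then show ?thesis using x Ma[OF ij(1)] Ma[OF ij(2)] kap by auto
    next
      case False
      then have "j < i" using ij by simp
      then have "a x (j-1) \<le> a x (i-2)" using ij by (intro amono) auto
      then show ?thesis using x Ma[OF ij(1)] Ma[OF ij(2)] kap by auto
    qed
  qed simp
  have d1: "(\<Union>i\<in>{2..n}. M i) \<inter> S1 = {}"
  proof (intro equalityI subsetI)
    fix x assume "x \<in> (\<Union>i\<in>{2..n}. M i) \<inter> S1"
    then obtain i where i: "i \<in> {2..n}" "x \<in> M i" "x \<in> S1" by auto
    have "a x 0 \<le> a x (i-2)" using i by (intro amono) auto
    then show "x \<in> {}" using i Ma[OF i(1)] S1a kap by auto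
  qed simp
  have d2: "((\<Union>i\<in>{2..n}. M i) \<union> S1) \<inter> S3 = {}"
  proof (intro equalityI subsetI)
    fix x assume x: "x \<in> ((\<Union>i\<in>{2..n}. M i) \<union> S1) \<inter> S3"
    then have x3: "a x (n-1) \<le> 1 - \<kappa>" using S3a by auto
    from x consider i where "i \<in> {2..n}" "x \<in> M i" | "x \<in> S1" by auto
    then show "x \<in> {}"
    proof cases
      case 1
      have "a x (i-1) \<le> a x (n-1)" using 1 by (intro amono) auto
      then show ?thesis using 1 Ma[OF 1(1)] x3 kap by auto
    next
      case 2
      have "a x 0 \<le> a x (n-1)" using n1 by (intro amono) auto
      then show ?thesis using 2 S1a x3 kap by auto
    qed
  qed simp
  have Eeq: "{x\<in>space OS. Ev C K x} = ((\<Union>i\<in>{2..n}. M i) \<union> S1) \<union> S3"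
    unfolding Ev_def M_def S1_def S3_def \<kappa>_def n_def by auto
  have "measure OS {x\<in>space OS. Ev C K x} = measure OS ((\<Union>i\<in>{2..n}. M i) \<union> S1) + measure OS S3"
    unfolding Eeq using Mm S1m S3m d2 by (intro P.finite_measure_Union) auto
  also have "measure OS ((\<Union>i\<in>{2..n}. M i) \<union> S1) = measure OS (\<Union>i\<in>{2..n}. M i) + measure OS S1"
    using Mm S1m d1 by (intro P.finite_measure_Union) auto
  also have "measure OS (\<Union>i\<in>{2..n}. M i) = (\<Sum>i=2..n. measure OS (M i))"
    using Mm disj by (intro P.finite_measure_finite_Union) auto
  finally show ?thesis unfolding OS_def M_def S1_def S3_def \<kappa>_def n_def .
qed

lemma Ev_meas:
  assumes KC: "K < C"
  shows "{x\<in>space (ostat_space C). Ev C K x} \<in> sets (ostat_space C)"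
proof -
  define OS where "OS = ostat_space C"
  define \<kappa> where "\<kappa> = real K / real C"
  have om: "(\<lambda>x. ordstat C x k) \<in> borel_measurable OS" if "1 \<le> k" "k \<le> C" for k
    unfolding OS_def ostat_space_def using that by (rule ordstat_meas)
  have pm: "(\<lambda>x. (ordstat C x k + ordstat C x l) / 2) \<in> borel_measurable OS"
    if "1 \<le> k" "k \<le> C" "1 \<le> l" "l \<le> C" for k l
    using om[OF that(1,2)] om[OF that(3,4)] by measurable
  define S1 where "S1 = {x \<in> space OS. (ordstat C x 1 + ordstat C x (K + 1)) / 2 \<ge> \<kappa>}"
  define S3 where "S3 = {x \<in> space OS. (ordstat C x (C - K) + ordstat C x C) / 2 \<le> 1 - \<kappa>}"
  define M where "M i = {x \<in> space OS. (ordstat C x i + ordstat C x (K + i)) / 2 \<ge> \<kappa>} \<inter>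
             {x \<in> space OS. (ordstat C x (i - 1) + ordstat C x (K + i - 1)) / 2 \<le> 1 - \<kappa>}" for i
  have S1m: "S1 \<in> sets OS" unfolding S1_def using KC by (intro ge_set pm) auto
  have S3m: "S3 \<in> sets OS" unfolding S3_def using KC by (intro le_set pm) auto
  have Mm: "M i \<in> sets OS" if "i \<in> {2..C-K}" for i
    unfolding M_def using that by (intro sets.Int ge_set le_set pm) auto
  have "{x\<in>space OS. Ev C K x} = S1 \<union> S3 \<union> (\<Union>i\<in>{2..C-K}. M i)"
    unfolding Ev_def S1_def S3_def M_def \<kappa>_def by auto
  also have "\<dots> \<in> sets OS" using S1m S3m Mm by auto
  finally show ?thesis unfolding OS_def .
qed

theorem lemma14:
  fixes C K :: nat
  assumes "real C / 2 < real K" and "K < C"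
  shows "(\<lambda>r::nat. measure (model C (r * C)) (at_least_K_stay C K (r * C) (r * K)))
     \<longlonglongrightarrow>
       (\<Sum>i=2..C-K. measure (ostat_space C)
          {x \<in> space (ostat_space C).
             (ordstat C x i + ordstat C x (K + i)) / 2 \<ge> real K / real C \<and>
             (ordstat C x (i - 1) + ordstat C x (K + i - 1)) / 2 \<le> 1 - real K / real C})
     + measure (ostat_space C)
          {x \<in> space (ostat_space C). (ordstat C x 1 + ordstat C x (K + 1)) / 2 \<ge> real K / real C}
     + measure (ostat_space C)
          {x \<in> space (ostat_space C). (ordstat C x (C - K) + ordstat C x C) / 2 \<le> 1 - real K / real C}"
proof -
  have KC: "K < C" by fact
  have CK: "C < 2*K" using assms(1) by linarith
  define OS where "OS = ostat_space C"
  define MC where "MC = PiM {..<C} (\<lambda>_. arc_unif)"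
  define T where "T = compose {..<C} gm"
  define h where "h r c = measure (MU (r*C)) {u\<in>space (MU (r*C)). (u, c) \<in> at_least_K_stay C K (r*C) (r*K)}" for r c
  define E where "E = {x\<in>space OS. Ev C K x}"
  interpret P: prob_space OS unfolding OS_def ostat_space_def by (intro prob_space_PiM prob_space_unif01)
  have pMC: "prob_space MC" unfolding MC_def by (intro prob_space_PiM prob_space_arc)
  have Tm: "T \<in> measurable OS MC" unfolding T_def OS_def MC_def by (rule compose_meas)
  have step1: "measure (model C (r*C)) (at_least_K_stay C K (r*C) (r*K)) = (\<integral>c. h r c \<partial>MC)"
    and hm: "h r \<in> borel_measurable MC" for r
    using fubini_measure[OF prob_space_MU[of "r*C"] prob_space_MU[of C] alks_meas[of C K "r*C" "r*K", unfolded model_def]]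
    unfolding h_def model_def MC_def by auto
  have step2: "(\<integral>c. h r c \<partial>MC) = (\<integral>x. h r (T x) \<partial>OS)" for r
  proof -
    have "(\<integral>c. h r c \<partial>MC) = (\<integral>c. h r c \<partial>distr OS MC T)"
      unfolding T_def OS_def MC_def MC_distr ..
    also have "\<dots> = (\<integral>x. h r (T x) \<partial>OS)" by (rule integral_distr[OF Tm hm])
    finally show ?thesis .
  qed
  have Em: "E \<in> sets OS"
    unfolding E_def OS_def by (rule Ev_meas[OF KC])
  have lim: "(\<lambda>r. \<integral>x. h r (T x) \<partial>OS) \<longlonglongrightarrow> (\<integral>x. indicator E x \<partial>OS)"
  proof (rule integral_dominated_convergence[where w="\<lambda>_. 1"])
    show "indicator E \<in> borel_measurable OS" using Em by simp
    show "(\<lambda>x. h r (T x)) \<in> borel_measurable OS" for r by (rule measurable_compose[OF Tm hm])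
    show "integrable OS (\<lambda>_. 1::real)" by simp
    show "AE x in OS. norm (h r (T x)) \<le> 1" for r
      unfolding h_def by (auto intro!: prob_space.prob_le_1[OF prob_space_MU])
    have "AE x in OS. (\<forall>j<C. x j \<in> {0..1}) \<and>
     (\<forall>j<C. \<forall>k<C. j \<noteq> k \<longrightarrow> x j \<noteq> x k \<and> x j \<noteq> 2*(real K / real C) - x k \<and> x j \<noteq> (2 - 2*(real K / real C)) - x k)"
      unfolding OS_def by (rule AE_gen)
    then show "AE x in OS. (\<lambda>r. h r (T x)) \<longlonglongrightarrow> indicator E x"
    proof (rule AE_mp[OF _ AE_I2[OF impI]])
      fix x assume x: "x \<in> space OS" and g: "(\<forall>j<C. x j \<in> {0..1}) \<and>
        (\<forall>j<C. \<forall>k<C. j \<noteq> k \<longrightarrow> x j \<noteq> x k \<and> x j \<noteq> 2*(real K / real C) - x k \<and> x j \<noteq> (2 - 2*(real K / real C)) - x k)"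
      have inj: "inj_on x {..<C}" using g by (auto simp: inj_on_def)
      have "(\<lambda>r. h r (T x)) \<longlonglongrightarrow> (if Ev C K x then 1 else 0)"
        unfolding h_def T_def by (rule pointwise[OF KC CK]) (use g inj in auto)
      moreover have "indicator E x = (if Ev C K x then 1 else (0::real))" using x by (simp add: E_def)
      ultimately show "(\<lambda>r. h r (T x)) \<longlonglongrightarrow> indicator E x" by simp
    qed
  qed
  have "(\<integral>x. indicator E x \<partial>OS) = measure OS E" using Em by simp
  with lim have l2: "(\<lambda>r. \<integral>x. h r (T x) \<partial>OS) \<longlonglongrightarrow> measure OS E" by simp
  note rs = rhs_sum[OF KC CK]
  show ?thesis unfolding step1 step2 rs[symmetric] using l2 unfolding E_def OS_def .
qed

end
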